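(* Let $a,c$ be nonzero constants, $N\ge1$, and $c_i,d_i,p_i,q_i,\xi_{i0},\eta_{i0}$ arbitrary real or complex parameters (with $p_i,q_i\neq0$, $1-ap_i,1-aq_i\neq0$). Define $$\phi^{(i)}_{n,m}(k)=c_ip_i^n(1-cp_i)^m(1-ap_i)^{-k}e^{\xi_i}+d_iq_i^n(1-cq_i)^m(1-aq_i)^{-k}e^{\eta_i},\quad \xi_i=p_i^{-1}x_{-1}+\xi_{i0},\ \eta_i=q_i^{-1}x_{-1}+\eta_{i0},$$ and $\tau_{n,m}(x_{-1},k)=\det(\phi^{(i)}_{n+j-1,m}(k))_{1\le i,j\le N}$; alternatively (with $p_i+q_j\neq0$, $1+aq_j\ne0$, $c_{ij}$ arbitrary constants, $\eta_j=q_j^{-1}x_{-1}+\eta_{j0}$) $$\tau_{n,m}(x_{-1},k)=\det\Big(c_{ij}+\frac{1}{p_i+q_j}\Big(-\frac{p_i}{q_j}\Big)^n\Big(\frac{1-cp_i}{1+cq_j}\Big)^m\Big(\frac{1-ap_i}{1+aq_j}\Big)^{-k}e^{\xi_i+\eta_j}\Big)_{1\le i,j\le N}.$$ Then for all integers $n,m,k$: $$\Big(\tfrac1aD_{x_{-1}}-1\Big)\tau_{n,m}(k+1)\cdot\tau_{n,m}(k)+\tau_{n+1,m}(k+1)\tau_{n-1,m}(k)=0,$$ $$\Big(\tfrac1cD_{x_{-1}}-1\Big)\tau_{n,m}(k)\cdot\tau_{n,m+1}(k)+\tau_{n+1,m}(k)\tau_{n-1,m+1}(k)=0.$$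
   Context: Hirota operator: $D_x\,a\cdot b=(\partial_x-\partial_{x'})a(x)b(x')|_{x'=x}=a_xb-ab_x$; the term "$-1$" acts as $-ab$. *)

theory Defs
  imports "HOL-Analysis.Analysis" "Jordan_Normal_Form.Determinant"
begin

text \<open>Hirota bilinear derivative in the variable x (= x_{-1}):
  D_x f . g = f' g - f g'.\<close>
definition hirota_D :: "(complex \<Rightarrow> complex) \<Rightarrow> (complex \<Rightarrow> complex) \<Rightarrow> complex \<Rightarrow> complex" where
  "hirota_D f g x = deriv f x * g x - f x * deriv g x"

definition bilinear_eqs :: "complex \<Rightarrow> complex \<Rightarrow> (int \<Rightarrow> int \<Rightarrow> int \<Rightarrow> complex \<Rightarrow> complex) \<Rightarrow> bool" where
  "bilinear_eqs a c tau \<longleftrightarrow>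
     (\<forall>n m k x.
        (1/a) * hirota_D (tau n m (k+1)) (tau n m k) x - tau n m (k+1) x * tau n m k x
          + tau (n+1) m (k+1) x * tau (n-1) m k x = 0
      \<and> (1/c) * hirota_D (tau n m k) (tau n (m+1) k) x - tau n m k x * tau n (m+1) k x
          + tau (n+1) m k x * tau (n-1) (m+1) k x = 0)"

definition phi :: "complex \<Rightarrow> complex \<Rightarrow> (nat \<Rightarrow> complex) \<Rightarrow> (nat \<Rightarrow> complex) \<Rightarrow> (nat \<Rightarrow> complex)
    \<Rightarrow> (nat \<Rightarrow> complex) \<Rightarrow> (nat \<Rightarrow> complex) \<Rightarrow> (nat \<Rightarrow> complex) \<Rightarrow> nat \<Rightarrow> int \<Rightarrow> int \<Rightarrow> int \<Rightarrow> complex \<Rightarrow> complex" where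
  "phi a c cs ds p q xi0 eta0 i n m k x =
     cs i * p i powi n * (1 - c * p i) powi m * (1 - a * p i) powi (-k) * exp (x / p i + xi0 i)
   + ds i * q i powi n * (1 - c * q i) powi m * (1 - a * q i) powi (-k) * exp (x / q i + eta0 i)"

text \<open>tau_{n,m}(x,k) = det(phi^(i)_{n+j-1,m}(k))_{1<=i,j<=N}; here 0-based: column j uses n+j.\<close>
definition tau_casorati :: "complex \<Rightarrow> complex \<Rightarrow> nat \<Rightarrow> (nat \<Rightarrow> complex) \<Rightarrow> (nat \<Rightarrow> complex) \<Rightarrow> (nat \<Rightarrow> complex)
    \<Rightarrow> (nat \<Rightarrow> complex) \<Rightarrow> (nat \<Rightarrow> complex) \<Rightarrow> (nat \<Rightarrow> complex) \<Rightarrow> int \<Rightarrow> int \<Rightarrow> int \<Rightarrow> complex \<Rightarrow> complex" where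
  "tau_casorati a c N cs ds p q xi0 eta0 n m k x =
     det (mat N N (\<lambda>(i, j). phi a c cs ds p q xi0 eta0 i (n + int j) m k x))"

definition tau_gram :: "complex \<Rightarrow> complex \<Rightarrow> nat \<Rightarrow> (nat \<Rightarrow> nat \<Rightarrow> complex) \<Rightarrow> (nat \<Rightarrow> complex) \<Rightarrow> (nat \<Rightarrow> complex)
    \<Rightarrow> (nat \<Rightarrow> complex) \<Rightarrow> (nat \<Rightarrow> complex) \<Rightarrow> int \<Rightarrow> int \<Rightarrow> int \<Rightarrow> complex \<Rightarrow> complex" where
  "tau_gram a c N C p q xi0 eta0 n m k x =
     det (mat N N (\<lambda>(i, j). C i j + 1 / (p i + q j) * (- p i / q j) powi n
        * ((1 - c * p i) / (1 + c * q j)) powi m * ((1 - a * p i) / (1 + a * q j)) powi (-k)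
        * exp ((x / p i + xi0 i) + (x / q j + eta0 j))))"

end

theory Submission
  imports Defs "Jordan_Normal_Form.Char_Poly"
begin


definition colr :: "'a mat \<Rightarrow> nat \<Rightarrow> (nat \<Rightarrow> 'a) \<Rightarrow> 'a mat" where
  "colr A j v = mat (dim_row A) (dim_col A) (\<lambda>(i,l). if l = j then v i else A $$ (i,l))"

lemma colr_carrier[simp]: "A \<in> carrier_mat n m \<Longrightarrow> colr A j v \<in> carrier_mat n m"
  by (auto simp: colr_def)
lemma colr_dim[simp]: "dim_row (colr A j v) = dim_row A" "dim_col (colr A j v) = dim_col A"
  by (auto simp: colr_def)
lemma colr_index[simp]: "i < dim_row A \<Longrightarrow> l < dim_col A \<Longrightarrow> colr A j v $$ (i,l) = (if l = j then v i else A $$ (i,l))"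
  by (auto simp: colr_def)

lemma det_colr_lin: fixes A :: "'a::comm_ring_1 mat"
  assumes A: "A \<in> carrier_mat n n" and j: "j < n"
  shows "det (colr A j v) = (\<Sum>i<n. v i * cofactor A i j)"
proof -
  have "det (colr A j v) = (\<Sum>i<n. colr A j v $$ (i,j) * cofactor (colr A j v) i j)"
    by (rule laplace_expansion_column[OF colr_carrier[OF A] j])
  also have "\<dots> = (\<Sum>i<n. v i * cofactor A i j)"
  proof (rule sum.cong[OF refl])
    fix i assume i: "i \<in> {..<n}"
    have "mat_delete (colr A j v) i j = mat_delete A i j"
      using A j i by (intro eq_matI) (auto simp: mat_delete_def)
    thus "colr A j v $$ (i,j) * cofactor (colr A j v) i j = v i * cofactor A i j"
      using A j i by (simp add: cofactor_def)
  qed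
  finally show ?thesis .
qed

lemma sum_two_nonzero: fixes n :: nat
  assumes "j < n" "l < n" "j \<noteq> l" "\<And>i. i < n \<Longrightarrow> i \<noteq> j \<Longrightarrow> i \<noteq> l \<Longrightarrow> f i = 0"
  shows "(\<Sum>i<n. f i) = f j + f l"
proof -
  have "(\<Sum>i<n. f i) = (\<Sum>i\<in>{j,l}. f i)"
    by (rule sum.mono_neutral_right) (use assms in auto)
  thus ?thesis using assms by simp
qed

lemma sum_one_nonzero: fixes n :: nat
  assumes "j < n" "\<And>i. i < n \<Longrightarrow> i \<noteq> j \<Longrightarrow> f i = 0"
  shows "(\<Sum>i<n. f i) = f j"
proof -
  have "(\<Sum>i<n. f i) = (\<Sum>i\<in>{j}. f i)"
    by (rule sum.mono_neutral_right) (use assms in auto)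
  thus ?thesis by simp
qed

definition unitv :: "nat \<Rightarrow> nat \<Rightarrow> 'a::zero_neq_one" where
  "unitv r i = (if i = r then 1 else 0)"

lemma det_colr_unit: fixes A :: "'a::comm_ring_1 mat"
  assumes A: "A \<in> carrier_mat n n" and j: "j < n" and r: "r < n"
  shows "det (colr A j (unitv r)) = cofactor A r j"
  unfolding det_colr_lin[OF A j] using r
  by (subst sum_one_nonzero[of r]) (auto simp: unitv_def)

lemma det_colr_ident: fixes A :: "'a::comm_ring_1 mat"
  assumes A: "A \<in> carrier_mat n n" and j: "j < n" and r: "r < n" and rj: "r \<noteq> j"
    and v: "\<And>i. i < n \<Longrightarrow> v i = A $$ (i, r)"
  shows "det (colr A j v) = 0"
  by (rule det_identical_columns[OF colr_carrier[OF A] rj r j]) (use A j r rj v in auto)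

lemma colr_self: assumes A: "A \<in> carrier_mat n m" and v: "\<And>i. i < n \<Longrightarrow> v i = A $$ (i, j)"
  shows "colr A j v = A"
  using A v by (intro eq_matI) auto

lemma colr_colr_same[simp]: "colr (colr A j v) j w = colr A j w"
  by (intro eq_matI) auto

lemma colr_commute: "j \<noteq> l \<Longrightarrow> colr (colr A j v) l w = colr (colr A l w) j v"
  by (intro eq_matI) auto

lemma det_colr_linear: fixes A :: "'a::comm_ring_1 mat"
  assumes A: "A \<in> carrier_mat n n" and j: "j < n"
  shows "det (colr A j (\<lambda>i. c * v i + d * w i)) = c * det (colr A j v) + d * det (colr A j w)"
  unfolding det_colr_lin[OF A j]
  by (simp add: sum_distrib_left sum.distrib algebra_simps)

lemma det_colr_scale: fixes A :: "'a::comm_ring_1 mat"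
  assumes A: "A \<in> carrier_mat n n" and j: "j < n"
  shows "det (colr A j (\<lambda>i. c * v i)) = c * det (colr A j v)"
  unfolding det_colr_lin[OF A j]
  by (simp add: sum_distrib_left algebra_simps)

lemma det_colr_one: fixes v :: "nat \<Rightarrow> 'a::comm_ring_1"
  assumes l: "l < n"
  shows "det (colr (1\<^sub>m n) l v) = v l"
proof -
  have "det (colr (1\<^sub>m n) l v) = (\<Sum>r<n. v r * cofactor (1\<^sub>m n) r l)"
    by (rule det_colr_lin[OF one_carrier_mat l])
  also have "\<dots> = v l * cofactor (1\<^sub>m n) l l"
  proof (rule sum_one_nonzero[OF l])
    fix r assume r: "r < n" "r \<noteq> l"
    have "cofactor (1\<^sub>m n) r l = det (colr (1\<^sub>m n) l (unitv r))"
      by (rule det_colr_unit[OF one_carrier_mat l r(1), symmetric])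
    also have "\<dots> = 0" by (rule det_colr_ident[OF one_carrier_mat l r]) (use r in \<open>auto simp: unitv_def\<close>)
    finally show "v r * cofactor (1\<^sub>m n) r l = 0" by (metis mult_zero_right)
  qed
  also have "cofactor (1\<^sub>m n) l l = det (colr (1\<^sub>m n) l (unitv l))"
    by (rule det_colr_unit[OF one_carrier_mat l l, symmetric])
  also have "colr (1\<^sub>m n) l (unitv l) = 1\<^sub>m n"
    by (rule colr_self) (use l in \<open>auto simp: unitv_def\<close>)
  finally show ?thesis by simp
qed

lemma det_colr2_one: fixes xi eta :: "nat \<Rightarrow> 'a::comm_ring_1"
  assumes j: "j < n" and l: "l < n" and jl: "j \<noteq> l"
  shows "det (colr (colr (1\<^sub>m n) j xi) l eta) = xi j * eta l - xi l * eta j"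
proof -
  let ?B = "colr (1\<^sub>m n) l eta"
  have B: "?B \<in> carrier_mat n n" by simp
  have "det (colr (colr (1\<^sub>m n) j xi) l eta) = det (colr ?B j xi)"
    using colr_commute[OF jl] by metis
  also have "\<dots> = (\<Sum>i<n. xi i * cofactor ?B i j)" by (rule det_colr_lin[OF B j])
  also have "\<dots> = xi j * cofactor ?B j j + xi l * cofactor ?B l j"
  proof (rule sum_two_nonzero[OF j l jl])
    fix i assume i: "i < n" "i \<noteq> j" "i \<noteq> l"
    have "cofactor ?B i j = det (colr ?B j (unitv i))" by (rule det_colr_unit[OF B j i(1), symmetric])
    also have "\<dots> = 0" by (rule det_colr_ident[OF B j i(1) i(2)]) (use i j l in \<open>auto simp: unitv_def\<close>)
    finally show "xi i * cofactor ?B i j = 0" by (metis mult_zero_right)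
  qed
  also have "cofactor ?B j j = eta l"
  proof -
    have "cofactor ?B j j = det (colr ?B j (unitv j))" by (rule det_colr_unit[OF B j j, symmetric])
    also have "colr ?B j (unitv j) = ?B" by (rule colr_self[OF B]) (use j jl in \<open>auto simp: unitv_def\<close>)
    finally show ?thesis using det_colr_one[OF l] by simp
  qed
  also have "cofactor ?B l j = - eta j"
  proof -
    let ?C = "colr (1\<^sub>m n) j (unitv l) :: 'a mat"
    have C: "?C \<in> carrier_mat n n" by simp
    have "cofactor ?B l j = det (colr ?B j (unitv l))" by (rule det_colr_unit[OF B j l, symmetric])
    also have "colr ?B j (unitv l) = colr ?C l eta" using colr_commute[OF jl] by metis
    also have "det \<dots> = (\<Sum>r<n. eta r * cofactor ?C r l)" by (rule det_colr_lin[OF C l])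
    also have "\<dots> = eta j * cofactor ?C j l + eta l * cofactor ?C l l"
    proof (rule sum_two_nonzero[OF j l jl])
      fix i assume i: "i < n" "i \<noteq> j" "i \<noteq> l"
      have "cofactor ?C i l = det (colr ?C l (unitv i))" by (rule det_colr_unit[OF C l i(1), symmetric])
      also have "\<dots> = 0" by (rule det_colr_ident[OF C l i(1) i(3)]) (use i j l in \<open>auto simp: unitv_def\<close>)
      finally show "eta i * cofactor ?C i l = 0" by (metis mult_zero_right)
    qed
    also have "cofactor ?C l l = 0"
    proof -
      have "cofactor ?C l l = det (colr ?C l (unitv l))" by (rule det_colr_unit[OF C l l, symmetric])
      also have "\<dots> = 0" by (rule det_colr_ident[OF C l j jl]) (use j l jl in \<open>auto simp: unitv_def\<close>)
      finally show ?thesis .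
    qed
    also have "cofactor ?C j l = -1"
    proof -
      have "cofactor ?C j l = det (colr ?C l (unitv j))" by (rule det_colr_unit[OF C l j, symmetric])
      also have "colr ?C l (unitv j) = swapcols j l (1\<^sub>m n)"
        by (intro eq_matI) (use j l in \<open>auto simp: unitv_def\<close>)
      also have "det \<dots> = - det (1\<^sub>m n :: 'a mat)" by (rule det_swapcols[OF j l jl one_carrier_mat])
      finally show ?thesis by simp
    qed
    finally show ?thesis by simp
  qed
  finally show ?thesis by (simp add: algebra_simps)
qed

lemma adj_mult_vec_colr: fixes A :: "'a::comm_ring_1 mat"
  assumes A: "A \<in> carrier_mat n n" and s: "s < n"
  shows "(adj_mat A *\<^sub>v vec n x) $ s = det (colr A s x)"
proof -
  have "(adj_mat A *\<^sub>v vec n x) $ s = (\<Sum>i<n. cofactor A i s * x i)"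
    using A s by (auto simp: adj_mat_def mult_mat_vec_def scalar_prod_def atLeast0LessThan intro!: sum.cong)
  thus ?thesis unfolding det_colr_lin[OF A s] by (simp add: ac_simps)
qed

lemma smult_one_mult_vec: assumes v: "v \<in> carrier_vec n"
  shows "(d \<cdot>\<^sub>m 1\<^sub>m n) *\<^sub>v v = (d::'a::comm_ring_1) \<cdot>\<^sub>v v"
proof (rule eq_vecI)
  fix i assume "i < dim_vec (d \<cdot>\<^sub>v v)"
  hence i: "i < n" using v by auto
  have "((d \<cdot>\<^sub>m 1\<^sub>m n) *\<^sub>v v) $ i = (\<Sum>k<n. (d \<cdot>\<^sub>m 1\<^sub>m n) $$ (i,k) * v $ k)"
    using i v by (auto simp: scalar_prod_def atLeast0LessThan intro!: sum.cong)
  also have "\<dots> = (d \<cdot>\<^sub>m 1\<^sub>m n) $$ (i,i) * v $ i"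
    by (rule sum_one_nonzero[OF i]) (use i in auto)
  finally show "((d \<cdot>\<^sub>m 1\<^sub>m n) *\<^sub>v v) $ i = (d \<cdot>\<^sub>v v) $ i" using i v by simp
qed (use v in auto)

lemma plucker_nz: fixes A :: "'a::idom mat"
  assumes A: "A \<in> carrier_mat n n" and j: "j < n" and l: "l < n" and jl: "j \<noteq> l"
    and D: "det A \<noteq> 0"
  shows "det A * det (colr (colr A j x) l y) =
    det (colr A j x) * det (colr A l y) - det (colr A l x) * det (colr A j y)"
proof -
  define xi where "xi = adj_mat A *\<^sub>v vec n x"
  define eta where "eta = adj_mat A *\<^sub>v vec n y"
  have adj: "adj_mat A \<in> carrier_mat n n" "A * adj_mat A = det A \<cdot>\<^sub>m 1\<^sub>m n" using adj_mat[OF A] by auto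
  have xiv: "xi \<in> carrier_vec n" "eta \<in> carrier_vec n" using adj by (auto simp: xi_def eta_def)
  have Axi: "A *\<^sub>v xi = det A \<cdot>\<^sub>v vec n x"
    unfolding xi_def using adj A by (simp add: assoc_mult_mat_vec[symmetric, of _ n n _ n] smult_one_mult_vec)
  have Aeta: "A *\<^sub>v eta = det A \<cdot>\<^sub>v vec n y"
    unfolding eta_def using adj A by (simp add: assoc_mult_mat_vec[symmetric, of _ n n _ n] smult_one_mult_vec)
  define E where "E = colr (colr (1\<^sub>m n) j (\<lambda>i. xi $ i)) l (\<lambda>i. eta $ i)"
  have E: "E \<in> carrier_mat n n" by (simp add: E_def)
  have AE: "A * E = colr (colr A j (\<lambda>i. det A * x i)) l (\<lambda>i. det A * y i)"
  proof (rule eq_matI)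
    fix i c assume i: "i < dim_row (colr (colr A j (\<lambda>i. det A * x i)) l (\<lambda>i. det A * y i))"
      and c: "c < dim_col (colr (colr A j (\<lambda>i. det A * x i)) l (\<lambda>i. det A * y i))"
    from i c A have i: "i < n" and c: "c < n" by auto
    have "(A * E) $$ (i,c) = row A i \<bullet> col E c" using A E i c by simp
    also have "\<dots> = (\<Sum>k<n. A $$ (i,k) * E $$ (k,c))"
      using A E i c by (simp add: scalar_prod_def atLeast0LessThan)
    also have "\<dots> = colr (colr A j (\<lambda>i. det A * x i)) l (\<lambda>i. det A * y i) $$ (i,c)"
    proof (cases "c = l")
      case True
      have "(\<Sum>k<n. A $$ (i,k) * E $$ (k,c)) = (A *\<^sub>v eta) $ i"
        using A i xiv True j l by (auto simp: E_def scalar_prod_def atLeast0LessThan intro!: sum.cong)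
      thus ?thesis using Aeta True A i c by simp
    next
      case cl: False
      show ?thesis
      proof (cases "c = j")
        case True
        have "(\<Sum>k<n. A $$ (i,k) * E $$ (k,c)) = (A *\<^sub>v xi) $ i"
          using A i xiv True jl j l by (auto simp: E_def scalar_prod_def atLeast0LessThan intro!: sum.cong)
        thus ?thesis using Axi True cl A i c by simp
      next
        case False
        have "(\<Sum>k<n. A $$ (i,k) * E $$ (k,c)) = A $$ (i,c) * E $$ (c,c)"
          by (rule sum_one_nonzero[OF c]) (use False cl c in \<open>auto simp: E_def\<close>)
        thus ?thesis using False cl c i A by (simp add: E_def)
      qed
    qed
    finally show "(A * E) $$ (i,c) = colr (colr A j (\<lambda>i. det A * x i)) l (\<lambda>i. det A * y i) $$ (i,c)" .
  qed (use A E in auto)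
  have "det (A * E) = det A * det E" by (rule det_mult[OF A E])
  also have "det E = xi $ j * eta $ l - xi $ l * eta $ j"
    unfolding E_def by (rule det_colr2_one[OF j l jl])
  also have "xi $ j = det (colr A j x)" unfolding xi_def by (rule adj_mult_vec_colr[OF A j])
  also have "xi $ l = det (colr A l x)" unfolding xi_def by (rule adj_mult_vec_colr[OF A l])
  also have "eta $ j = det (colr A j y)" unfolding eta_def by (rule adj_mult_vec_colr[OF A j])
  also have "eta $ l = det (colr A l y)" unfolding eta_def by (rule adj_mult_vec_colr[OF A l])
  finally have 1: "det (A * E) = det A * (det (colr A j x) * det (colr A l y) - det (colr A l x) * det (colr A j y))" .
  have "det (A * E) = det (colr (colr A j (\<lambda>i. det A * x i)) l (\<lambda>i. det A * y i))" by (simp add: AE)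
  also have "\<dots> = det A * det (colr (colr A j (\<lambda>i. det A * x i)) l y)"
    by (rule det_colr_scale) (use A l in auto)
  also have "colr (colr A j (\<lambda>i. det A * x i)) l y = colr (colr A l y) j (\<lambda>i. det A * x i)"
    by (rule colr_commute[OF jl])
  also have "det \<dots> = det A * det (colr (colr A l y) j x)"
    by (rule det_colr_scale) (use A j in auto)
  also have "colr (colr A l y) j x = colr (colr A j x) l y" by (rule colr_commute[OF jl, symmetric])
  finally have 2: "det (A * E) = det A * (det A * det (colr (colr A j x) l y))" .
  from 1 2 D show ?thesis by simp
qed

lemma ev0_hom: "comm_ring_hom (\<lambda>p::'a::comm_ring_1 poly. poly p 0)"
  by unfold_locales auto

lemma map_mat_colr: "map_mat h (colr M j v) = colr (map_mat h M) j (\<lambda>i. h (v i))"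
  by (intro eq_matI) auto

lemma plucker: fixes A :: "'a::idom mat"
  assumes A: "A \<in> carrier_mat n n" and j: "j < n" and l: "l < n" and jl: "j \<noteq> l"
  shows "det A * det (colr (colr A j x) l y) =
    det (colr A j x) * det (colr A l y) - det (colr A l x) * det (colr A j y)"
proof -
  let ?h = "\<lambda>p::'a poly. poly p 0"
  define P where "P = char_poly_matrix (- A)"
  have mA: "- A \<in> carrier_mat n n" using A by simp
  have P: "P \<in> carrier_mat n n" unfolding P_def using mA by simp
  have "coeff (det P) n = 1" using degree_monic_char_poly[OF mA] by (simp add: P_def char_poly_def)
  hence DP: "det P \<noteq> 0" by auto
  have hP: "map_mat ?h P = A"
    using A by (intro eq_matI) (auto simp: P_def char_poly_matrix_def)
  define X where "X = (\<lambda>i. [:x i:])"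
  define Y where "Y = (\<lambda>i. [:y i:])"
  have hX: "(\<lambda>i. ?h (X i)) = x" "(\<lambda>i. ?h (Y i)) = y" by (auto simp: X_def Y_def)
  have "det P * det (colr (colr P j X) l Y) =
    det (colr P j X) * det (colr P l Y) - det (colr P l X) * det (colr P j Y)"
    by (rule plucker_nz[OF P j l jl DP])
  hence "?h (det P * det (colr (colr P j X) l Y)) =
    ?h (det (colr P j X) * det (colr P l Y) - det (colr P l X) * det (colr P j Y))" by simp
  thus ?thesis
    unfolding poly_mult poly_diff comm_ring_hom.hom_det[OF ev0_hom, symmetric] map_mat_colr hP hX .
qed

lemma det_deriv_row:
  fixes F :: "complex \<Rightarrow> nat \<Rightarrow> nat \<Rightarrow> complex"
  assumes d: "\<And>i j. i < n \<Longrightarrow> j < n \<Longrightarrow> ((\<lambda>x. F x i j) has_field_derivative F' i j) (at x)"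
  shows "((\<lambda>x. det (mat n n (\<lambda>(i,j). F x i j))) has_field_derivative
     (\<Sum>i<n. det (mat n n (\<lambda>(r,c). if r = i then F' r c else F x r c)))) (at x)"
proof -
  let ?P = "{p. p permutes {0..<n}}"
  have eq: "(\<lambda>x. det (mat n n (\<lambda>(i,j). F x i j))) =
     (\<lambda>x. \<Sum>p\<in>?P. signof p * (\<Prod>r=0..<n. F x r (p r)))"
  proof
    fix y
    show "det (mat n n (\<lambda>(i,j). F y i j)) = (\<Sum>p\<in>?P. signof p * (\<Prod>r=0..<n. F y r (p r)))"
      unfolding det_def'[of "mat n n (\<lambda>(i,j). F y i j)" n, OF mat_carrier]
      by (intro sum.cong refl arg_cong2[where f="(*)"] prod.cong) (auto simp: permutes_in_image)
  qed
  have "((\<lambda>x. \<Sum>p\<in>?P. signof p * (\<Prod>r=0..<n. F x r (p r))) has_field_derivative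
      (\<Sum>p\<in>?P. signof p * (\<Sum>i\<in>{0..<n}. F' i (p i) * (\<Prod>r\<in>{0..<n}-{i}. F x r (p r))))) (at x)"
  proof (rule DERIV_sum, rule DERIV_cmult, rule has_field_derivative_prod)
    fix p r assume p: "p \<in> ?P" and r: "r \<in> {0..<n}"
    from p r have "p r < n" by (auto simp: permutes_in_image)
    with r show "((\<lambda>x. F x r (p r)) has_field_derivative F' r (p r)) (at x)" by (intro d) auto
  qed
  also have "(\<Sum>p\<in>?P. signof p * (\<Sum>i\<in>{0..<n}. F' i (p i) * (\<Prod>r\<in>{0..<n}-{i}. F x r (p r))))
      = (\<Sum>i<n. det (mat n n (\<lambda>(r,c). if r = i then F' r c else F x r c)))"
  proof -
    have "(\<Sum>p\<in>?P. signof p * (\<Sum>i\<in>{0..<n}. F' i (p i) * (\<Prod>r\<in>{0..<n}-{i}. F x r (p r))))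
       = (\<Sum>i\<in>{0..<n}. \<Sum>p\<in>?P. signof p * (F' i (p i) * (\<Prod>r\<in>{0..<n}-{i}. F x r (p r))))"
      by (simp add: sum_distrib_left sum.swap[of _ ?P])
    also have "\<dots> = (\<Sum>i<n. det (mat n n (\<lambda>(r,c). if r = i then F' r c else F x r c)))"
      unfolding atLeast0LessThan[symmetric]
    proof (rule sum.cong[OF refl])
      fix i assume i: "i \<in> {0..<n}"
      show "(\<Sum>p\<in>?P. signof p * (F' i (p i) * (\<Prod>r\<in>{0..<n}-{i}. F x r (p r)))) =
          det (mat n n (\<lambda>(r,c). if r = i then F' r c else F x r c))"
        unfolding det_def'[of "mat n n (\<lambda>(r,c). if r = i then F' r c else F x r c)" n, OF mat_carrier]
      proof (intro sum.cong refl arg_cong2[where f="(*)"])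
        fix p assume p: "p \<in> ?P"
        have pr: "\<And>r. r < n \<Longrightarrow> p r < n" using p by (auto simp: permutes_in_image)
        have "(\<Prod>r=0..<n. mat n n (\<lambda>(r,c). if r = i then F' r c else F x r c) $$ (r, p r))
            = (\<Prod>r=0..<n. (if r = i then F' r (p r) else F x r (p r)))"
          by (intro prod.cong refl) (auto simp: pr)
        also have "\<dots> = (if i = i then F' i (p i) else F x i (p i)) *
            (\<Prod>r\<in>{0..<n}-{i}. (if r = i then F' r (p r) else F x r (p r)))"
          by (rule prod.remove) (use i in auto)
        also have "(\<Prod>r\<in>{0..<n}-{i}. (if r = i then F' r (p r) else F x r (p r))) =
            (\<Prod>r\<in>{0..<n}-{i}. F x r (p r))" by (intro prod.cong) auto
        finally show "F' i (p i) * (\<Prod>r\<in>{0..<n}-{i}. F x r (p r)) =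
           (\<Prod>r=0..<n. mat n n (\<lambda>(r,c). if r = i then F' r c else F x r c) $$ (r, p r))" by simp
      qed
    qed
    finally show ?thesis .
  qed
  finally show ?thesis unfolding eq .
qed

lemma det_deriv_col:
  fixes F :: "complex \<Rightarrow> nat \<Rightarrow> nat \<Rightarrow> complex"
  assumes d: "\<And>i j. i < n \<Longrightarrow> j < n \<Longrightarrow> ((\<lambda>x. F x i j) has_field_derivative F' i j) (at x)"
  shows "((\<lambda>x. det (mat n n (\<lambda>(i,j). F x i j))) has_field_derivative
     (\<Sum>j<n. det (colr (mat n n (\<lambda>(i,j). F x i j)) j (\<lambda>i. F' i j)))) (at x)"
proof -
  have tr: "\<And>G :: nat \<Rightarrow> nat \<Rightarrow> complex. det (mat n n (\<lambda>(i,j). G i j)) = det (mat n n (\<lambda>(i,j). G j i))"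
  proof -
    fix G :: "nat \<Rightarrow> nat \<Rightarrow> complex"
    have "det (mat n n (\<lambda>(i,j). G i j)) = det ((mat n n (\<lambda>(i,j). G i j))\<^sup>T)"
      by (rule det_transpose[OF mat_carrier, symmetric])
    also have "(mat n n (\<lambda>(i,j). G i j))\<^sup>T = mat n n (\<lambda>(i,j). G j i)" by (intro eq_matI) auto
    finally show "det (mat n n (\<lambda>(i,j). G i j)) = det (mat n n (\<lambda>(i,j). G j i))" .
  qed
  have "((\<lambda>x. det (mat n n (\<lambda>(i,j). F x j i))) has_field_derivative
     (\<Sum>i<n. det (mat n n (\<lambda>(r,c). if r = i then F' c r else F x c r)))) (at x)"
    by (rule det_deriv_row) (rule d; simp)
  also have "(\<lambda>x. det (mat n n (\<lambda>(i,j). F x j i))) = (\<lambda>x. det (mat n n (\<lambda>(i,j). F x i j)))"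
    using tr by metis
  also have "(\<Sum>i<n. det (mat n n (\<lambda>(r,c). if r = i then F' c r else F x c r))) =
      (\<Sum>j<n. det (colr (mat n n (\<lambda>(i,j). F x i j)) j (\<lambda>i. F' i j)))"
  proof (rule sum.cong[OF refl])
    fix j assume j: "j \<in> {..<n}"
    have "det (mat n n (\<lambda>(r,c). if r = j then F' c r else F x c r)) =
        det (mat n n (\<lambda>(r,c). if c = j then F' r c else F x r c))"
      using tr[of "\<lambda>r c. if c = j then F' r c else F x r c"] by simp
    also have "mat n n (\<lambda>(r,c). if c = j then F' r c else F x r c) = colr (mat n n (\<lambda>(i,j). F x i j)) j (\<lambda>i. F' i j)"
      by (intro eq_matI) auto
    finally show "det (mat n n (\<lambda>(r,c). if r = j then F' c r else F x c r)) =
       det (colr (mat n n (\<lambda>(i,j). F x i j)) j (\<lambda>i. F' i j))" .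
  qed
  finally show ?thesis .
qed



lemma det_add_col_multiples:
  fixes B :: "'a::comm_ring_1 mat"
  assumes B: "B \<in> carrier_mat n n" and k: "k < n" and u: "\<And>i. i < n \<Longrightarrow> B $$ (i,k) = u i"
  shows "m \<le> k \<Longrightarrow> det (mat n n (\<lambda>(i,j). B $$ (i,j) + (if j < m then u i * v j else 0))) = det B"
proof (induction m)
  case 0
  have "mat n n (\<lambda>(i,j). B $$ (i,j) + (if j < 0 then u i * v j else 0)) = B"
    using B by (intro eq_matI) auto
  thus ?case by simp
next
  case (Suc m)
  let ?K = "mat n n (\<lambda>(i,j). B $$ (i,j) + (if j < m then u i * v j else 0))"
  have K: "?K \<in> carrier_mat n n" by simp
  have m: "m < n" "m \<noteq> k" "m < k" using Suc k by auto
  have "mat n n (\<lambda>(i,j). B $$ (i,j) + (if j < Suc m then u i * v j else 0)) =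
     colr ?K m (\<lambda>i. 1 * ?K $$ (i,m) + v m * u i)"
    using m by (intro eq_matI) auto
  also have "det \<dots> = 1 * det (colr ?K m (\<lambda>i. ?K $$ (i,m))) + v m * det (colr ?K m u)"
    by (rule det_colr_linear[OF K m(1)])
  moreover have "colr ?K m (\<lambda>i. ?K $$ (i,m)) = ?K" by (rule colr_self[OF K]) auto
  moreover have "det (colr ?K m u) = 0"
    by (rule det_colr_ident[OF K m(1) k m(2)[symmetric]]) (use u m k in auto)
  ultimately show ?case using Suc by simp
qed

lemma det_rank_one:
  fixes A :: "'a::comm_ring_1 mat"
  assumes A: "A \<in> carrier_mat n n"
  shows "det (mat n n (\<lambda>(i,j). A $$ (i,j) + u i * v j)) = det A + (\<Sum>j<n. v j * det (colr A j u))"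
proof -
  have main: "m \<le> n \<Longrightarrow> det (mat n n (\<lambda>(i,j). A $$ (i,j) + (if j < m then u i * v j else 0)))
      = det A + (\<Sum>j<m. v j * det (colr A j u))" for m
  proof (induction m)
    case 0
    have "mat n n (\<lambda>(i,j). A $$ (i,j) + (if j < 0 then u i * v j else 0)) = A"
      using A by (intro eq_matI) auto
    thus ?case by simp
  next
    case (Suc m)
    let ?K = "mat n n (\<lambda>(i,j). A $$ (i,j) + (if j < m then u i * v j else 0))"
    have K: "?K \<in> carrier_mat n n" by simp
    have m: "m < n" using Suc by auto
    have "mat n n (\<lambda>(i,j). A $$ (i,j) + (if j < Suc m then u i * v j else 0)) =
       colr ?K m (\<lambda>i. 1 * ?K $$ (i,m) + v m * u i)"
      using m by (intro eq_matI) auto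
    also have "det \<dots> = 1 * det (colr ?K m (\<lambda>i. ?K $$ (i,m))) + v m * det (colr ?K m u)"
      by (rule det_colr_linear[OF K m])
    moreover have "colr ?K m (\<lambda>i. ?K $$ (i,m)) = ?K" by (rule colr_self[OF K]) auto
    moreover have "det (colr ?K m u) = det (colr A m u)"
    proof -
      have "colr ?K m u = mat n n (\<lambda>(i,j). colr A m u $$ (i,j) + (if j < m then u i * v j else 0))"
        using A m by (intro eq_matI) auto
      moreover have "det (mat n n (\<lambda>(i,j). colr A m u $$ (i,j) + (if j < m then u i * v j else 0))) = det (colr A m u)"
        by (rule det_add_col_multiples[OF colr_carrier[OF A] m]) (use A m in auto)
      ultimately show ?thesis by simp
    qed
    ultimately show ?case using Suc by simp
  qed
  have "mat n n (\<lambda>(i,j). A $$ (i,j) + u i * v j) = mat n n (\<lambda>(i,j). A $$ (i,j) + (if j < n then u i * v j else 0))"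
    by (intro eq_matI) auto
  thus ?thesis using main[of n] by simp
qed

definition gf :: "'a::comm_ring_1 mat \<Rightarrow> nat \<Rightarrow> (nat \<Rightarrow> 'a) \<Rightarrow> (nat \<Rightarrow> 'a) \<Rightarrow> 'a" where
  "gf A n x v = (\<Sum>j<n. v j * det (colr A j x))"

definition upd1 :: "'a::comm_ring_1 mat \<Rightarrow> nat \<Rightarrow> (nat \<Rightarrow> 'a) \<Rightarrow> (nat \<Rightarrow> 'a) \<Rightarrow> 'a mat" where
  "upd1 A n u v = mat n n (\<lambda>(i,j). A $$ (i,j) + u i * v j)"

lemma det_upd1: fixes A :: "'a::comm_ring_1 mat"
  assumes A: "A \<in> carrier_mat n n"
  shows "det (upd1 A n u v) = det A + gf A n u v"
  unfolding upd1_def gf_def by (rule det_rank_one[OF A])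

lemma jac_two: fixes A :: "'a::idom mat"
  assumes A: "A \<in> carrier_mat n n"
  shows "det A * gf (upd1 A n u v) n y w = det A * gf A n y w + gf A n u v * gf A n y w - gf A n u w * gf A n y v"
proof -
  let ?D = "det A"
  let ?Y = "\<lambda>j. det (colr A j y)" and ?U = "\<lambda>j. det (colr A j u)"
  have each: "?D * det (colr (upd1 A n u v) j y) = ?D * ?Y j + (\<Sum>l<n. v l * (?Y j * ?U l - ?Y l * ?U j))"
    if j: "j < n" for j
  proof -
    define v' where "v' = (\<lambda>l. if l = j then 0 else v l)"
    have "colr (upd1 A n u v) j y = mat n n (\<lambda>(i,l). colr A j y $$ (i,l) + u i * v' l)"
      using A j by (intro eq_matI) (auto simp: upd1_def v'_def)
    hence "det (colr (upd1 A n u v) j y) = ?Y j + (\<Sum>l<n. v' l * det (colr (colr A j y) l u))"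
      using det_rank_one[OF colr_carrier[OF A]] by simp
    hence "?D * det (colr (upd1 A n u v) j y) = ?D * ?Y j + (\<Sum>l<n. v' l * (?D * det (colr (colr A j y) l u)))"
      by (simp add: algebra_simps sum_distrib_left)
    also have "(\<Sum>l<n. v' l * (?D * det (colr (colr A j y) l u))) = (\<Sum>l<n. v l * (?Y j * ?U l - ?Y l * ?U j))"
    proof (rule sum.cong[OF refl])
      fix l assume l: "l \<in> {..<n}"
      show "v' l * (?D * det (colr (colr A j y) l u)) = v l * (?Y j * ?U l - ?Y l * ?U j)"
      proof (cases "l = j")
        case True thus ?thesis by (simp add: v'_def)
      next
        case False
        have "?D * det (colr (colr A j y) l u) = ?Y j * ?U l - ?Y l * ?U j"
          by (rule plucker[OF A j]) (use l False in auto)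
        thus ?thesis using False by (simp add: v'_def)
      qed
    qed
    finally show ?thesis .
  qed
  have "?D * gf (upd1 A n u v) n y w = (\<Sum>j<n. w j * (?D * det (colr (upd1 A n u v) j y)))"
    unfolding gf_def by (simp add: sum_distrib_left algebra_simps)
  also have "\<dots> = (\<Sum>j<n. w j * (?D * ?Y j + (\<Sum>l<n. v l * (?Y j * ?U l - ?Y l * ?U j))))"
    by (rule sum.cong[OF refl]) (simp add: each)
  also have "\<dots> = ?D * gf A n y w + ((\<Sum>j<n. \<Sum>l<n. (w j * ?Y j) * (v l * ?U l)) - (\<Sum>j<n. \<Sum>l<n. (v l * ?Y l) * (w j * ?U j)))"
  proof -
    have "\<And>j. w j * (?D * ?Y j + (\<Sum>l<n. v l * (?Y j * ?U l - ?Y l * ?U j))) =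
       ?D * (w j * ?Y j) + ((\<Sum>l<n. (w j * ?Y j) * (v l * ?U l)) - (\<Sum>l<n. (v l * ?Y l) * (w j * ?U j)))"
      by (simp add: sum_distrib_left sum_subtractf[symmetric] algebra_simps)
    hence "(\<Sum>j<n. w j * (?D * ?Y j + (\<Sum>l<n. v l * (?Y j * ?U l - ?Y l * ?U j)))) =
        (\<Sum>j<n. ?D * (w j * ?Y j) + ((\<Sum>l<n. (w j * ?Y j) * (v l * ?U l)) - (\<Sum>l<n. (v l * ?Y l) * (w j * ?U j))))"
      by simp
    also have "\<dots> = ?D * gf A n y w + ((\<Sum>j<n. \<Sum>l<n. (w j * ?Y j) * (v l * ?U l)) - (\<Sum>j<n. \<Sum>l<n. (v l * ?Y l) * (w j * ?U j)))"
      unfolding gf_def sum.distrib sum_subtractf sum_distrib_left ..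
    finally show ?thesis .
  qed
  also have "(\<Sum>j<n. \<Sum>l<n. (w j * ?Y j) * (v l * ?U l)) = gf A n y w * gf A n u v"
    unfolding gf_def by (simp add: sum_product)
  also have "(\<Sum>j<n. \<Sum>l<n. (v l * ?Y l) * (w j * ?U j)) = gf A n u w * gf A n y v"
  proof -
    have "gf A n u w * gf A n y v = (\<Sum>j<n. \<Sum>l<n. (w j * ?U j) * (v l * ?Y l))"
      unfolding gf_def sum_product ..
    also have "\<dots> = (\<Sum>j<n. \<Sum>l<n. (v l * ?Y l) * (w j * ?U j))"
      by (intro sum.cong refl) (rule mult.commute)
    finally show ?thesis by simp
  qed
  finally show ?thesis by (simp add: algebra_simps)
qed

lemma gf_lin1: fixes A :: "'a::comm_ring_1 mat" assumes A: "A \<in> carrier_mat n n"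
  shows "gf A n (\<lambda>i. c * x i + d * y i) v = c * gf A n x v + d * gf A n y v"
proof -
  have "gf A n (\<lambda>i. c * x i + d * y i) v = (\<Sum>j<n. v j * (c * det (colr A j x) + d * det (colr A j y)))"
    unfolding gf_def by (intro sum.cong refl) (simp add: det_colr_linear[OF A])
  thus ?thesis unfolding gf_def by (simp add: sum.distrib sum_distrib_left algebra_simps)
qed

lemma gf_scale1: fixes A :: "'a::comm_ring_1 mat" assumes A: "A \<in> carrier_mat n n"
  shows "gf A n (\<lambda>i. c * x i) v = c * gf A n x v"
  using gf_lin1[OF A, of c x 0 x v] by simp

lemma gf_lin2: "gf A n x (\<lambda>j. c * v j + d * w j) = c * gf A n x v + d * gf A n x w"
  unfolding gf_def by (simp add: sum.distrib sum_distrib_left algebra_simps)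

lemma gf_scale2: "gf A n x (\<lambda>j. c * v j) = c * gf A n x v"
  unfolding gf_def by (simp add: sum_distrib_left algebra_simps)

lemma deriv_det_rank1:
  fixes F :: "complex \<Rightarrow> nat \<Rightarrow> nat \<Rightarrow> complex"
  assumes d: "\<And>i j. i < n \<Longrightarrow> j < n \<Longrightarrow> ((\<lambda>y. F y i j) has_field_derivative f i * g j) (at x)"
  shows "deriv (\<lambda>y. det (mat n n (\<lambda>(i,j). F y i j))) x = gf (mat n n (\<lambda>(i,j). F x i j)) n f g"
proof -
  have "((\<lambda>y. det (mat n n (\<lambda>(i,j). F y i j))) has_field_derivative
     (\<Sum>j<n. det (colr (mat n n (\<lambda>(i,j). F x i j)) j (\<lambda>i. f i * g j)))) (at x)"
    by (rule det_deriv_col) (rule d)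
  moreover have "(\<Sum>j<n. det (colr (mat n n (\<lambda>(i,j). F x i j)) j (\<lambda>i. f i * g j))) = gf (mat n n (\<lambda>(i,j). F x i j)) n f g"
    unfolding gf_def
  proof (intro sum.cong refl)
    fix j assume j: "j \<in> {..<n}"
    have "det (colr (mat n n (\<lambda>(i,j). F x i j)) j (\<lambda>i. g j * f i)) = g j * det (colr (mat n n (\<lambda>(i,j). F x i j)) j f)"
      by (rule det_colr_scale) (use j in auto)
    thus "det (colr (mat n n (\<lambda>(i,j). F x i j)) j (\<lambda>i. f i * g j)) = g j * det (colr (mat n n (\<lambda>(i,j). F x i j)) j f)"
      by (simp add: mult.commute)
  qed
  ultimately show ?thesis by (simp add: DERIV_imp_deriv)
qed

lemma gram_eq1:
  fixes F0 F1 Fp Fm :: "complex \<Rightarrow> nat \<Rightarrow> nat \<Rightarrow> complex" and u ph ps w :: "nat \<Rightarrow> complex" and a x :: complex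
  assumes a: "a \<noteq> 0"
    and F1: "\<And>i j. i < N \<Longrightarrow> j < N \<Longrightarrow> F1 x i j = F0 x i j + (a * u i) * ps j"
    and Fp: "\<And>i j. i < N \<Longrightarrow> j < N \<Longrightarrow> Fp x i j = F0 x i j + u i * (- w j)"
    and Fm: "\<And>i j. i < N \<Longrightarrow> j < N \<Longrightarrow> Fm x i j = F0 x i j + ph i * (- ps j)"
    and d0: "\<And>i j. i < N \<Longrightarrow> j < N \<Longrightarrow> ((\<lambda>y. F0 y i j) has_field_derivative ph i * w j) (at x)"
    and d1: "\<And>i j. i < N \<Longrightarrow> j < N \<Longrightarrow> ((\<lambda>y. F1 y i j) has_field_derivative (ph i + a * u i) * (w j + a * ps j)) (at x)"
  shows "(1/a) * (deriv (\<lambda>y. det (mat N N (\<lambda>(i,j). F1 y i j))) x * det (mat N N (\<lambda>(i,j). F0 x i j))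
          - det (mat N N (\<lambda>(i,j). F1 x i j)) * deriv (\<lambda>y. det (mat N N (\<lambda>(i,j). F0 y i j))) x)
        - det (mat N N (\<lambda>(i,j). F1 x i j)) * det (mat N N (\<lambda>(i,j). F0 x i j))
        + det (mat N N (\<lambda>(i,j). Fp x i j)) * det (mat N N (\<lambda>(i,j). Fm x i j)) = 0"
proof -
  define A where "A = mat N N (\<lambda>(i,j). F0 x i j)"
  have A: "A \<in> carrier_mat N N" by (simp add: A_def)
  define D where "D = det A"
  define X where "X = gf A N u ps"
  define Y where "Y = gf A N u w"
  define Z where "Z = gf A N ph ps"
  define W where "W = gf A N ph w"
  have A1: "mat N N (\<lambda>(i,j). F1 x i j) = upd1 A N (\<lambda>i. a * u i) ps"
    by (intro eq_matI) (auto simp: upd1_def A_def F1)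
  have Ap: "mat N N (\<lambda>(i,j). Fp x i j) = upd1 A N u (\<lambda>j. - w j)"
    by (intro eq_matI) (auto simp: upd1_def A_def Fp)
  have Am: "mat N N (\<lambda>(i,j). Fm x i j) = upd1 A N ph (\<lambda>j. - ps j)"
    by (intro eq_matI) (auto simp: upd1_def A_def Fm)
  have dT0: "deriv (\<lambda>y. det (mat N N (\<lambda>(i,j). F0 y i j))) x = W"
    unfolding W_def A_def by (rule deriv_det_rank1) (rule d0)
  have dT1: "deriv (\<lambda>y. det (mat N N (\<lambda>(i,j). F1 y i j))) x = gf (upd1 A N (\<lambda>i. a * u i) ps) N (\<lambda>i. ph i + a * u i) (\<lambda>j. w j + a * ps j)"
    unfolding A1[symmetric] by (rule deriv_det_rank1) (rule d1)
  have T1: "det (mat N N (\<lambda>(i,j). F1 x i j)) = D + a * X"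
    unfolding A1 det_upd1[OF A] D_def X_def gf_scale1[OF A] ..
  have Tp: "det (mat N N (\<lambda>(i,j). Fp x i j)) = D - Y"
    unfolding Ap det_upd1[OF A] D_def Y_def using gf_scale2[of A N u "-1" w] by simp
  have Tm: "det (mat N N (\<lambda>(i,j). Fm x i j)) = D - Z"
    unfolding Am det_upd1[OF A] D_def Z_def using gf_scale2[of A N ph "-1" ps] by simp
  have J: "D * gf (upd1 A N (\<lambda>i. a * u i) ps) N (\<lambda>i. ph i + a * u i) (\<lambda>j. w j + a * ps j)
     = D * (W + a * Z + a * Y + a * a * X) + (a * X) * (W + a * Z + a * Y + a * a * X) - (a * Y + a * a * X) * (Z + a * X)"
  proof -
    have g1: "gf A N (\<lambda>i. ph i + a * u i) (\<lambda>j. w j + a * ps j) = W + a * Z + a * Y + a * a * X"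
      using gf_lin1[OF A, of 1 ph a u] gf_lin2[of A N _ 1 w a ps]
      by (simp add: W_def X_def Y_def Z_def algebra_simps)
    have g2: "gf A N (\<lambda>i. a * u i) ps = a * X" unfolding X_def by (rule gf_scale1[OF A])
    have g3: "gf A N (\<lambda>i. a * u i) (\<lambda>j. w j + a * ps j) = a * Y + a * a * X"
      using gf_scale1[OF A, of a u] gf_lin2[of A N u 1 w a ps]
      by (simp add: X_def Y_def algebra_simps)
    have g4: "gf A N (\<lambda>i. ph i + a * u i) ps = Z + a * X"
      using gf_lin1[OF A, of 1 ph a u ps] by (simp add: X_def Z_def algebra_simps)
    show ?thesis
      using jac_two[OF A, of "\<lambda>i. a * u i" ps "\<lambda>i. ph i + a * u i" "\<lambda>j. w j + a * ps j"]
      unfolding g1 g2 g3 g4 D_def by (simp add: algebra_simps)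
  qed
  have main: "(D * gf (upd1 A N (\<lambda>i. a * u i) ps) N (\<lambda>i. ph i + a * u i) (\<lambda>j. w j + a * ps j)
      - (D + a * X) * W) - a * ((D + a * X) * D) + a * ((D - Y) * (D - Z)) = 0"
    unfolding J by (simp add: algebra_simps)
  show ?thesis
    unfolding dT0 dT1 T1 Tp Tm D_def[symmetric] A_def[symmetric]
    using main a by (simp add: field_simps)
qed

lemma gram_eq2:
  fixes F0 F1 Fp Fm :: "complex \<Rightarrow> nat \<Rightarrow> nat \<Rightarrow> complex" and f ph r w :: "nat \<Rightarrow> complex" and c x :: complex
  assumes c: "c \<noteq> 0"
    and F1: "\<And>i j. i < N \<Longrightarrow> j < N \<Longrightarrow> F1 x i j = F0 x i j + (- c * f i) * r j"
    and Fp: "\<And>i j. i < N \<Longrightarrow> j < N \<Longrightarrow> Fp x i j = F0 x i j + f i * (- w j)"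
    and Fm: "\<And>i j. i < N \<Longrightarrow> j < N \<Longrightarrow> Fm x i j = F0 x i j + ph i * (- r j)"
    and d0: "\<And>i j. i < N \<Longrightarrow> j < N \<Longrightarrow> ((\<lambda>y. F0 y i j) has_field_derivative ph i * w j) (at x)"
    and d1: "\<And>i j. i < N \<Longrightarrow> j < N \<Longrightarrow> ((\<lambda>y. F1 y i j) has_field_derivative (ph i - c * f i) * (w j - c * r j)) (at x)"
  shows "(1/c) * (deriv (\<lambda>y. det (mat N N (\<lambda>(i,j). F0 y i j))) x * det (mat N N (\<lambda>(i,j). F1 x i j))
          - det (mat N N (\<lambda>(i,j). F0 x i j)) * deriv (\<lambda>y. det (mat N N (\<lambda>(i,j). F1 y i j))) x)
        - det (mat N N (\<lambda>(i,j). F0 x i j)) * det (mat N N (\<lambda>(i,j). F1 x i j))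
        + det (mat N N (\<lambda>(i,j). Fp x i j)) * det (mat N N (\<lambda>(i,j). Fm x i j)) = 0"
proof -
  define A where "A = mat N N (\<lambda>(i,j). F0 x i j)"
  have A: "A \<in> carrier_mat N N" by (simp add: A_def)
  define D where "D = det A"
  define X where "X = gf A N f r"
  define Y where "Y = gf A N f w"
  define Z where "Z = gf A N ph r"
  define W where "W = gf A N ph w"
  have A1: "mat N N (\<lambda>(i,j). F1 x i j) = upd1 A N (\<lambda>i. - c * f i) r"
    by (intro eq_matI) (auto simp: upd1_def A_def F1)
  have Ap: "mat N N (\<lambda>(i,j). Fp x i j) = upd1 A N f (\<lambda>j. - w j)"
    by (intro eq_matI) (auto simp: upd1_def A_def Fp)
  have Am: "mat N N (\<lambda>(i,j). Fm x i j) = upd1 A N ph (\<lambda>j. - r j)"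
    by (intro eq_matI) (auto simp: upd1_def A_def Fm)
  have dT0: "deriv (\<lambda>y. det (mat N N (\<lambda>(i,j). F0 y i j))) x = W"
    unfolding W_def A_def by (rule deriv_det_rank1) (rule d0)
  have d1': "\<And>i j. i < N \<Longrightarrow> j < N \<Longrightarrow> ((\<lambda>y. F1 y i j) has_field_derivative (ph i + (- c) * f i) * (w j + (- c) * r j)) (at x)"
    using d1 by simp
  have dT1: "deriv (\<lambda>y. det (mat N N (\<lambda>(i,j). F1 y i j))) x = gf (upd1 A N (\<lambda>i. - c * f i) r) N (\<lambda>i. ph i + (- c) * f i) (\<lambda>j. w j + (- c) * r j)"
    unfolding A1[symmetric] by (rule deriv_det_rank1) (rule d1')
  have T1: "det (mat N N (\<lambda>(i,j). F1 x i j)) = D - c * X"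
    unfolding A1 det_upd1[OF A] D_def X_def gf_scale1[OF A] by simp
  have Tp: "det (mat N N (\<lambda>(i,j). Fp x i j)) = D - Y"
    unfolding Ap det_upd1[OF A] D_def Y_def using gf_scale2[of A N f "-1" w] by simp
  have Tm: "det (mat N N (\<lambda>(i,j). Fm x i j)) = D - Z"
    unfolding Am det_upd1[OF A] D_def Z_def using gf_scale2[of A N ph "-1" r] by simp
  have J: "D * gf (upd1 A N (\<lambda>i. - c * f i) r) N (\<lambda>i. ph i + (- c) * f i) (\<lambda>j. w j + (- c) * r j)
     = D * (W - c * Z - c * Y + c * c * X) + (- c * X) * (W - c * Z - c * Y + c * c * X) - (- c * Y + c * c * X) * (Z - c * X)"
  proof -
    have e1: "(\<lambda>i. ph i + (- c) * f i) = (\<lambda>i. 1 * ph i + (- c) * f i)" by simp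
    have e2: "(\<lambda>j. w j + (- c) * r j) = (\<lambda>j. 1 * w j + (- c) * r j)" by simp
    have g1: "gf A N (\<lambda>i. ph i + (- c) * f i) (\<lambda>j. w j + (- c) * r j) = W - c * Z - c * Y + c * c * X"
      unfolding e1 e2 gf_lin1[OF A] gf_lin2 W_def X_def Y_def Z_def by (simp add: algebra_simps)
    have g2: "gf A N (\<lambda>i. - c * f i) r = - c * X" unfolding X_def by (rule gf_scale1[OF A])
    have g3: "gf A N (\<lambda>i. - c * f i) (\<lambda>j. w j + (- c) * r j) = - c * Y + c * c * X"
      unfolding e2 gf_scale1[OF A] gf_lin2 X_def Y_def by (simp add: algebra_simps)
    have g4: "gf A N (\<lambda>i. ph i + (- c) * f i) r = Z - c * X"
      unfolding e1 gf_lin1[OF A] X_def Z_def by (simp add: algebra_simps)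
    show ?thesis
      using jac_two[OF A, of "\<lambda>i. - c * f i" r "\<lambda>i. ph i + (- c) * f i" "\<lambda>j. w j + (- c) * r j"]
      unfolding g1 g2 g3 g4 D_def by (simp add: algebra_simps)
  qed
  have main: "W * (D - c * X) - D * gf (upd1 A N (\<lambda>i. - c * f i) r) N (\<lambda>i. ph i + (- c) * f i) (\<lambda>j. w j + (- c) * r j)
      - c * (D * (D - c * X)) + c * ((D - Y) * (D - Z)) = 0"
    unfolding J by (simp add: algebra_simps)
  show ?thesis
    unfolding dT0 dT1 T1 Tp Tm D_def[symmetric] A_def[symmetric]
    using main c by (simp add: field_simps)
qed

lemma border:
  fixes g :: "nat \<Rightarrow> nat \<Rightarrow> 'a::comm_ring_1" and a b :: 'a
  shows "det (mat (Suc N) (Suc N) (\<lambda>(i,c). if i < N then g c i else b * a ^ (N - c)))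
       = b * det (mat N N (\<lambda>(i,c). g c i - a * g (c+1) i))"
proof -
  let ?n = "Suc N"
  define K where "K = mat ?n ?n (\<lambda>(i,c). if i < N then g c i else b * a ^ (N - c))"
  define L :: "'a mat" where "L = mat ?n ?n (\<lambda>(r,c). if r = c then 1 else if r = c + 1 then - a else 0)"
  have K: "K \<in> carrier_mat ?n ?n" and L: "L \<in> carrier_mat ?n ?n" by (auto simp: K_def L_def)
  have detL: "det L = 1"
  proof -
    have "det L = prod_list (diag_mat L)"
      by (rule det_lower_triangular[OF _ L]) (auto simp: L_def)
    also have "\<dots> = 1" unfolding prod_list_diag_prod by (simp add: L_def)
    finally show ?thesis .
  qed
  define K' where "K' = mat ?n ?n (\<lambda>(i,c). if c < N then (if i < N then g c i - a * g (c+1) i else 0)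
                                     else (if i < N then g N i else b))"
  have KL: "K * L = K'"
  proof (rule eq_matI)
    fix i c assume i: "i < dim_row K'" and c: "c < dim_col K'"
    hence i: "i < ?n" and c: "c < ?n" by (auto simp: K'_def)
    have "(K * L) $$ (i,c) = (\<Sum>r<?n. K $$ (i,r) * L $$ (r,c))"
      using K L i c by (simp add: scalar_prod_def atLeast0LessThan)
    also have "\<dots> = K' $$ (i,c)"
    proof (cases "c < N")
      case True
      have "(\<Sum>r<?n. K $$ (i,r) * L $$ (r,c)) = K $$ (i,c) * L $$ (c,c) + K $$ (i,c+1) * L $$ (c+1,c)"
        by (rule sum_two_nonzero) (use True c in \<open>auto simp: L_def\<close>)
      also have "\<dots> = K' $$ (i,c)"
      proof (cases "i < N")
        case True
        thus ?thesis using \<open>c < N\<close> i c by (simp add: K_def L_def K'_def)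
      next
        case False
        hence "N - c = Suc (N - (c+1))" using \<open>c < N\<close> by simp
        thus ?thesis using False \<open>c < N\<close> i c by (simp add: K_def L_def K'_def algebra_simps)
      qed
      finally show ?thesis .
    next
      case False
      hence cN: "c = N" using c by simp
      have "(\<Sum>r<?n. K $$ (i,r) * L $$ (r,c)) = K $$ (i,c) * L $$ (c,c)"
        by (rule sum_one_nonzero[OF c]) (use cN c in \<open>auto simp: L_def\<close>)
      thus ?thesis using cN i by (simp add: K_def L_def K'_def)
    qed
    finally show "(K * L) $$ (i,c) = K' $$ (i,c)" .
  qed (use K L in \<open>auto simp: K'_def\<close>)
  have "det K' = (\<Sum>c<?n. K' $$ (N,c) * cofactor K' N c)"
    by (rule laplace_expansion_row) (auto simp: K'_def)
  also have "\<dots> = K' $$ (N,N) * cofactor K' N N"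
    by (rule sum_one_nonzero) (auto simp: K'_def)
  also have "cofactor K' N N = det (mat N N (\<lambda>(i,c). g c i - a * g (c+1) i))"
  proof -
    have "mat_delete K' N N = mat N N (\<lambda>(i,c). g c i - a * g (c+1) i)"
      by (intro eq_matI) (auto simp: K'_def mat_delete_def)
    thus ?thesis by (simp add: cofactor_def)
  qed
  finally have "det K' = b * det (mat N N (\<lambda>(i,c). g c i - a * g (c+1) i))" by (simp add: K'_def)
  moreover have "det K' = det K" using det_mult[OF K L] KL detL by simp
  ultimately show ?thesis by (simp add: K_def)
qed

definition Pc :: "(int \<Rightarrow> complex \<Rightarrow> nat \<Rightarrow> complex) \<Rightarrow> nat \<Rightarrow> int \<Rightarrow> complex \<Rightarrow> complex" where
  "Pc psi N s y = det (mat N N (\<lambda>(i,l). psi (s + int l) y i))"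

definition Qc :: "(int \<Rightarrow> complex \<Rightarrow> nat \<Rightarrow> complex) \<Rightarrow> complex \<Rightarrow> nat \<Rightarrow> int \<Rightarrow> complex \<Rightarrow> complex" where
  "Qc psi a N s y = det (mat N N (\<lambda>(i,l). psi (s + int l) y i - a * psi (s + int l + 1) y i))"

lemma Qc_border: "Qc psi a N 0 y =
   det (mat (Suc N) (Suc N) (\<lambda>(i,c). if i < N then psi (int c) y i else 1 * a ^ (N - c)))"
  unfolding Qc_def border by (simp add: add.commute)

lemma colr_cong: "A \<in> carrier_mat n m \<Longrightarrow> (\<And>i. i < n \<Longrightarrow> v i = w i) \<Longrightarrow> colr A j v = colr A j w"
  by (intro eq_matI) auto

lemma casorati_core:
  fixes psi :: "int \<Rightarrow> complex \<Rightarrow> nat \<Rightarrow> complex" and a x :: complex and N :: nat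
  assumes a: "a \<noteq> 0" and N: "N \<ge> 1"
    and d: "\<And>j y i. i < N \<Longrightarrow> ((\<lambda>y. psi j y i) has_field_derivative psi (j - 1) y i) (at y)"
  shows "(1/a) * (deriv (Pc psi N 0) x * Qc psi a N 0 x - Pc psi N 0 x * deriv (Qc psi a N 0) x)
     - Pc psi N 0 x * Qc psi a N 0 x + Pc psi N 1 x * Qc psi a N (-1) x = 0"
proof -
  let ?n = "Suc N"
  define M where "M = mat ?n ?n (\<lambda>(i,c). if i < N then psi (int c) x i else 1 * a ^ (N - c))"
  have M: "M \<in> carrier_mat ?n ?n" by (simp add: M_def)
  define xm where "xm = (\<lambda>i. if i < N then psi (-1) x i else a ^ (N+1))"
  define e :: "nat \<Rightarrow> complex" where "e = unitv N"
  define Pm where "Pm = mat N N (\<lambda>(i,l). psi (int l) x i)"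
  have Pm: "Pm \<in> carrier_mat N N" by (simp add: Pm_def)
  have N0: "0 < N" using N by simp
  have jl: "0 \<noteq> N" "(0::nat) < ?n" "N < ?n" using N by auto
  have dP: "deriv (Pc psi N 0) x = det (colr Pm 0 (\<lambda>i. psi (-1) x i))"
  proof -
    have "((\<lambda>y. det (mat N N (\<lambda>(i,l). psi (int l) y i))) has_field_derivative
        (\<Sum>j<N. det (colr (mat N N (\<lambda>(i,l). psi (int l) x i)) j (\<lambda>i. psi (int j - 1) x i)))) (at x)"
      by (rule det_deriv_col) (rule d)
    moreover have "(\<Sum>j<N. det (colr Pm j (\<lambda>i. psi (int j - 1) x i))) = det (colr Pm 0 (\<lambda>i. psi (int 0 - 1) x i))"
    proof (rule sum_one_nonzero[OF N0])
      fix j assume j: "j < N" "j \<noteq> 0"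
      show "det (colr Pm j (\<lambda>i. psi (int j - 1) x i)) = 0"
      proof (rule det_colr_ident[OF Pm j(1)])
        show "j - 1 < N" "j - 1 \<noteq> j" using j by auto
        fix i assume i: "i < N"
        have "int (j - 1) = int j - 1" using j by simp
        thus "psi (int j - 1) x i = Pm $$ (i, j - 1)" using i j by (simp add: Pm_def)
      qed
    qed
    moreover have "Pc psi N 0 = (\<lambda>y. det (mat N N (\<lambda>(i,l). psi (int l) y i)))"
      by (simp add: Pc_def fun_eq_iff)
    ultimately show ?thesis by (simp add: DERIV_imp_deriv Pm_def)
  qed
  have dQ: "deriv (Qc psi a N 0) x = det (colr M 0 xm) - a * det M"
  proof -
    have eqQ: "Qc psi a N 0 = (\<lambda>y. det (mat ?n ?n (\<lambda>(i,c). if i < N then psi (int c) y i else 1 * a ^ (N - c))))"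
      by (simp add: Qc_border fun_eq_iff)
    have "((\<lambda>y. det (mat ?n ?n (\<lambda>(i,c). if i < N then psi (int c) y i else 1 * a ^ (N - c)))) has_field_derivative
        (\<Sum>c<?n. det (colr M c (\<lambda>i. if i < N then psi (int c - 1) x i else 0)))) (at x)"
      unfolding M_def
    proof (rule det_deriv_col)
      fix i c assume i: "i < ?n" and c: "c < ?n"
      show "((\<lambda>y. if i < N then psi (int c) y i else 1 * a ^ (N - c)) has_field_derivative
         (if i < N then psi (int c - 1) x i else 0)) (at x)"
        by (cases "i < N") (auto intro: d)
    qed
    moreover have "(\<Sum>c<?n. det (colr M c (\<lambda>i. if i < N then psi (int c - 1) x i else 0)))
        = det (colr M 0 xm) - a * det M"
    proof -
      have each: "det (colr M c (\<lambda>i. if i < N then psi (int c - 1) x i else 0)) =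
          (if c = 0 then det (colr M 0 xm) else 0) - a * (a ^ (N - c) * cofactor M N c)" if c: "c < ?n" for c
      proof -
        define pv where "pv = (if c = 0 then xm else (\<lambda>i. M $$ (i, c - 1)))"
        have eqc: "colr M c (\<lambda>i. if i < N then psi (int c - 1) x i else 0) = colr M c (\<lambda>i. 1 * pv i + (- (a * a ^ (N - c))) * e i)"
        proof (rule colr_cong[OF M])
          fix i assume iN: "i < ?n"
          show "(if i < N then psi (int c - 1) x i else 0) = 1 * pv i + (- (a * a ^ (N - c))) * e i"
          proof (cases "c = 0")
            case True thus ?thesis using iN by (auto simp: pv_def xm_def e_def unitv_def)
          next
            case False
            have ic: "int (c - 1) = int c - 1" using False by simp
            show ?thesis
            proof (cases "i < N")
              case True thus ?thesis using False c ic by (auto simp: pv_def M_def e_def unitv_def)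
            next
              case False2: False
              show ?thesis
              proof (cases "i = N")
                case True
                have "N - (c - 1) = Suc (N - c)" using False c by simp
                thus ?thesis using True False c by (auto simp: pv_def M_def e_def unitv_def)
              next
                case False
                thus ?thesis using False2 iN by simp
              qed
            qed
          qed
        qed
        have "det (colr M c (\<lambda>i. if i < N then psi (int c - 1) x i else 0)) =
            1 * det (colr M c pv) + (- (a * a ^ (N - c))) * det (colr M c e)"
          unfolding eqc by (rule det_colr_linear[OF M c])
        moreover have "det (colr M c e) = cofactor M N c" unfolding e_def by (rule det_colr_unit[OF M c]) simp
        moreover have "det (colr M c pv) = (if c = 0 then det (colr M 0 xm) else 0)"
        proof (cases "c = 0")
          case True thus ?thesis by (simp add: pv_def)
        next
          case False
          have "det (colr M c pv) = 0"
            by (rule det_colr_ident[of _ ?n _ "c - 1"]) (use M c False in \<open>auto simp: pv_def\<close>)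
          thus ?thesis using False by simp
        qed
        ultimately show ?thesis by (simp add: algebra_simps)
      qed
      have "(\<Sum>c<?n. det (colr M c (\<lambda>i. if i < N then psi (int c - 1) x i else 0)))
          = (\<Sum>c<?n. (if c = 0 then det (colr M 0 xm) else 0) - a * (a ^ (N - c) * cofactor M N c))"
        by (rule sum.cong[OF refl]) (simp add: each)
      also have "\<dots> = det (colr M 0 xm) - a * (\<Sum>c<?n. a ^ (N - c) * cofactor M N c)"
        by (simp add: sum_subtractf sum_distrib_left ring_distribs)
      also have "(\<Sum>c<?n. a ^ (N - c) * cofactor M N c) = det M"
        by (subst laplace_expansion_row[OF M, of N]) (auto simp: M_def intro!: sum.cong)
      finally show ?thesis .
    qed
    ultimately show ?thesis unfolding eqQ by (simp add: DERIV_imp_deriv)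
  qed
  have Q0: "Qc psi a N 0 x = det M" unfolding M_def Qc_border ..
  have F2: "det (colr (colr M 0 xm) N e) = det (colr Pm 0 (\<lambda>i. psi (-1) x i))"
  proof -
    have "det (colr (colr M 0 xm) N e) = cofactor (colr M 0 xm) N N"
      unfolding e_def by (rule det_colr_unit) (use M in auto)
    moreover have "mat_delete (colr M 0 xm) N N = colr Pm 0 (\<lambda>i. psi (-1) x i)"
      using M N0 by (intro eq_matI) (auto simp: mat_delete_def M_def Pm_def xm_def)
    ultimately show ?thesis by (simp add: cofactor_def)
  qed
  have F3: "det (colr M N e) = Pc psi N 0 x"
  proof -
    have "det (colr M N e) = cofactor M N N"
      unfolding e_def by (rule det_colr_unit) (use M in auto)
    moreover have "mat_delete M N N = mat N N (\<lambda>(i,l). psi (0 + int l) x i)"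
      using M by (intro eq_matI) (auto simp: mat_delete_def M_def)
    ultimately show ?thesis by (simp add: cofactor_def Pc_def)
  qed
  have F5: "det (colr M 0 e) = (-1) ^ N * Pc psi N 1 x"
  proof -
    have "det (colr M 0 e) = cofactor M N 0"
      unfolding e_def by (rule det_colr_unit) (use M in auto)
    moreover have "mat_delete M N 0 = mat N N (\<lambda>(i,l). psi (1 + int l) x i)"
      using M by (intro eq_matI) (auto simp: mat_delete_def M_def)
    ultimately show ?thesis by (simp add: cofactor_def Pc_def)
  qed
  have F4: "det (colr M N xm) = (-1) ^ N * (a * Qc psi a N (-1) x)"
  proof -
    have C: "colr M N xm \<in> carrier_mat (1 + N) (1 + N)" using M by simp
    have "det (colr M N xm) = (-1) ^ (1 * N) * det (mat (1 + N) (1 + N) (\<lambda>(i,j). colr M N xm $$ (i, if j < 1 then j + N else j - 1)))"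
      by (rule det_swap_cols[OF C])
    also have "mat (1 + N) (1 + N) (\<lambda>(i,j). colr M N xm $$ (i, if j < 1 then j + N else j - 1)) =
       mat ?n ?n (\<lambda>(i,c). if i < N then (\<lambda>c i. psi (int c - 1) x i) c i else a * a ^ (N - c))"
    proof (rule eq_matI)
      fix i c assume i: "i < dim_row (mat ?n ?n (\<lambda>(i,c). if i < N then (\<lambda>c i. psi (int c - 1) x i) c i else a * a ^ (N - c)))"
        and c: "c < dim_col (mat ?n ?n (\<lambda>(i,c). if i < N then (\<lambda>c i. psi (int c - 1) x i) c i else a * a ^ (N - c)))"
      hence i: "i < ?n" and c: "c < ?n" by auto
      show "mat (1 + N) (1 + N) (\<lambda>(i,j). colr M N xm $$ (i, if j < 1 then j + N else j - 1)) $$ (i,c) =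
         mat ?n ?n (\<lambda>(i,c). if i < N then (\<lambda>c i. psi (int c - 1) x i) c i else a * a ^ (N - c)) $$ (i,c)"
      proof (cases "c = 0")
        case True thus ?thesis using i M by (simp add: xm_def)
      next
        case False
        have ic: "int (c - 1) = int c - 1" using False by simp
        have ne: "c - 1 \<noteq> N" using c False by simp
        have pw: "N - (c - 1) = Suc (N - c)" using c False by simp
        show ?thesis using False i c M ic ne pw by (simp add: M_def xm_def)
      qed
    qed auto
    also have "det (mat ?n ?n (\<lambda>(i,c). if i < N then (\<lambda>c i. psi (int c - 1) x i) c i else a * a ^ (N - c)))
       = a * Qc psi a N (-1) x"
      unfolding border Qc_def by (simp add: algebra_simps)
    finally show ?thesis by simp
  qed
  have Pl: "det M * det (colr (colr M 0 xm) N e) =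
    det (colr M 0 xm) * det (colr M N e) - det (colr M N xm) * det (colr M 0 e)"
    by (rule plucker[OF M jl(2) jl(3) jl(1)])
  have sgn: "((-1::complex) ^ N) * (-1) ^ N = 1" by (simp add: power_mult_distrib[symmetric])
  have key: "Qc psi a N 0 x * deriv (Pc psi N 0) x =
      det (colr M 0 xm) * Pc psi N 0 x - a * Qc psi a N (-1) x * Pc psi N 1 x"
    using Pl unfolding F2 F3 F4 F5 Q0[symmetric] dP[symmetric]
    by (simp add: algebra_simps sgn)
  show ?thesis
    unfolding dQ Q0[symmetric] using key a
    by (simp add: field_simps)
qed

lemma powi_minus_succ: assumes "(z::complex) \<noteq> 0" shows "z powi (- (k + 1)) = z powi (- k) / z"
proof -
  have e: "- (k + 1) = - k - 1" by simp
  show ?thesis unfolding e using power_int_diff[of z "- k" 1] assms by simp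
qed

lemma powi_succ: "(z::complex) \<noteq> 0 \<Longrightarrow> z powi (n + 1) = z powi n * z"
  by (simp add: power_int_add_1)

lemma powi_pred: "(z::complex) \<noteq> 0 \<Longrightarrow> z powi (n - 1) = z powi n / z"
  using power_int_diff[of z n 1] by simp

lemma term_k: fixes r a s M E :: complex
  assumes r: "r \<noteq> 0" and d: "1 - a * r \<noteq> 0"
  shows "s * r powi n * M * (1 - a * r) powi (- k) * E =
    s * r powi n * M * (1 - a * r) powi (- (k + 1)) * E - a * (s * r powi (n + 1) * M * (1 - a * r) powi (- (k + 1)) * E)"
proof -
  define T where "T = s * r powi n * M * (1 - a * r) powi (- k) * E"
  have 1: "s * r powi n * M * (1 - a * r) powi (- (k + 1)) * E = T / (1 - a * r)"
    unfolding powi_minus_succ[OF d] T_def by simp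
  have 2: "s * r powi (n + 1) * M * (1 - a * r) powi (- (k + 1)) * E = r * T / (1 - a * r)"
    unfolding powi_minus_succ[OF d] powi_succ[OF r] T_def by (simp add: algebra_simps)
  have 3: "T = T / (1 - a * r) - a * (r * T / (1 - a * r))"
  proof -
    define dd where "dd = 1 - a * r"
    have ddn: "dd \<noteq> 0" using d by (simp add: dd_def)
    have "T / dd - a * (r * T / dd) = (T - a * r * T) / dd" by (simp add: diff_divide_distrib)
    also have "T - a * r * T = dd * T" by (simp add: dd_def algebra_simps)
    also have "dd * T / dd = T" using ddn by simp
    finally show ?thesis by (simp add: dd_def)
  qed
  show ?thesis unfolding 1 2 T_def[symmetric] by (rule 3)
qed

lemma term_m: fixes r c s Z E :: complex
  assumes "r \<noteq> 0" "1 - c * r \<noteq> 0"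
  shows "s * r powi n * (1 - c * r) powi (m + 1) * Z * E =
    s * r powi n * (1 - c * r) powi m * Z * E - c * (s * r powi (n + 1) * (1 - c * r) powi m * Z * E)"
  unfolding powi_succ[OF assms(2)] powi_succ[OF assms(1)] using assms by (simp add: field_simps)

lemma phi_shift_k:
  assumes "p i \<noteq> 0" "q i \<noteq> 0" "1 - a * p i \<noteq> 0" "1 - a * q i \<noteq> 0"
  shows "phi a c cs ds p q xi0 eta0 i n m k y =
    phi a c cs ds p q xi0 eta0 i n m (k+1) y - a * phi a c cs ds p q xi0 eta0 i (n+1) m (k+1) y"
  by (simp only: phi_def term_k[OF assms(1,3), of "cs i" n "(1 - c * p i) powi m" k "exp (y / p i + xi0 i)"]
    term_k[OF assms(2,4), of "ds i" n "(1 - c * q i) powi m" k "exp (y / q i + eta0 i)"]) (simp add: algebra_simps)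

lemma phi_shift_m:
  assumes "p i \<noteq> 0" "q i \<noteq> 0" "1 - c * p i \<noteq> 0" "1 - c * q i \<noteq> 0"
  shows "phi a c cs ds p q xi0 eta0 i n (m+1) k y =
    phi a c cs ds p q xi0 eta0 i n m k y - c * phi a c cs ds p q xi0 eta0 i (n+1) m k y"
  by (simp only: phi_def term_m[OF assms(1,3), of "cs i" n m "(1 - a * p i) powi (- k)" "exp (y / p i + xi0 i)"]
    term_m[OF assms(2,4), of "ds i" n m "(1 - a * q i) powi (- k)" "exp (y / q i + eta0 i)"]) (simp add: algebra_simps)

lemma exp_term_deriv: "(r::complex) \<noteq> 0 \<Longrightarrow> ((\<lambda>y. K * exp (y / r + x0)) has_field_derivative (K / r) * exp (y / r + x0)) (at (y::complex))"
  by (auto intro!: derivative_eq_intros simp: field_simps)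

lemma phi_deriv:
  assumes "p i \<noteq> 0" "q i \<noteq> 0"
  shows "((\<lambda>y. phi a c cs ds p q xi0 eta0 i j m k y) has_field_derivative phi a c cs ds p q xi0 eta0 i (j - 1) m k y) (at y)"
proof -
  have D: "((\<lambda>y. phi a c cs ds p q xi0 eta0 i j m k y) has_field_derivative
      (cs i * p i powi j * (1 - c * p i) powi m * (1 - a * p i) powi (- k) / p i) * exp (y / p i + xi0 i)
    + (ds i * q i powi j * (1 - c * q i) powi m * (1 - a * q i) powi (- k) / q i) * exp (y / q i + eta0 i)) (at y)"
    unfolding phi_def by (intro DERIV_add exp_term_deriv assms)
  moreover have "(cs i * p i powi j * (1 - c * p i) powi m * (1 - a * p i) powi (- k) / p i) * exp (y / p i + xi0 i)
    + (ds i * q i powi j * (1 - c * q i) powi m * (1 - a * q i) powi (- k) / q i) * exp (y / q i + eta0 i)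
    = phi a c cs ds p q xi0 eta0 i (j - 1) m k y"
    unfolding phi_def powi_pred[OF assms(1)] powi_pred[OF assms(2)] by simp
  ultimately show ?thesis by simp
qed

lemma casorati_bilinear:
  fixes a c :: complex and N :: nat
  assumes a: "a \<noteq> 0" and c: "c \<noteq> 0" and N: "N \<ge> 1"
    and H: "\<forall>i<N. p i \<noteq> 0 \<and> q i \<noteq> 0 \<and> 1 - a * p i \<noteq> 0 \<and> 1 - a * q i \<noteq> 0
                 \<and> 1 - c * p i \<noteq> 0 \<and> 1 - c * q i \<noteq> 0"
  shows "bilinear_eqs a c (tau_casorati a c N cs ds p q xi0 eta0)"
proof -
  let ?tau = "tau_casorati a c N cs ds p q xi0 eta0"
  have eq1: "(1/a) * hirota_D (?tau n m (k+1)) (?tau n m k) x - ?tau n m (k+1) x * ?tau n m k x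
          + ?tau (n+1) m (k+1) x * ?tau (n-1) m k x = 0" for n m k x
  proof -
    define psi where "psi = (\<lambda>j y i. phi a c cs ds p q xi0 eta0 i (n + j) m (k+1) y)"
    have d: "((\<lambda>y. psi j y i) has_field_derivative psi (j - 1) y i) (at y)" if i: "i < N" for j y i
    proof -
      have "((\<lambda>y. phi a c cs ds p q xi0 eta0 i (n + j) m (k+1) y) has_field_derivative
          phi a c cs ds p q xi0 eta0 i (n + j - 1) m (k+1) y) (at y)"
        by (rule phi_deriv) (use H i in auto)
      thus ?thesis by (simp add: psi_def algebra_simps)
    qed
    have P0: "Pc psi N 0 = ?tau n m (k+1)" by (simp add: fun_eq_iff Pc_def psi_def tau_casorati_def)
    have P1: "Pc psi N 1 x = ?tau (n+1) m (k+1) x" by (simp add: Pc_def psi_def tau_casorati_def ac_simps)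
    have Q: "Qc psi a N s y = ?tau (n + s) m k y" for s y
      unfolding Qc_def tau_casorati_def
    proof (rule arg_cong[where f = det], rule eq_matI)
      fix i l assume "i < dim_row (mat N N (\<lambda>(i, j). phi a c cs ds p q xi0 eta0 i (n + s + int j) m k y))"
        and "l < dim_col (mat N N (\<lambda>(i, j). phi a c cs ds p q xi0 eta0 i (n + s + int j) m k y))"
      hence il: "i < N" "l < N" by auto
      have "phi a c cs ds p q xi0 eta0 i (n + s + int l) m k y =
         phi a c cs ds p q xi0 eta0 i (n + s + int l) m (k+1) y - a * phi a c cs ds p q xi0 eta0 i (n + s + int l + 1) m (k+1) y"
        by (rule phi_shift_k) (use H il in auto)
      thus "mat N N (\<lambda>(i,l). psi (s + int l) y i - a * psi (s + int l + 1) y i) $$ (i,l) =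
          mat N N (\<lambda>(i, j). phi a c cs ds p q xi0 eta0 i (n + s + int j) m k y) $$ (i,l)"
        using il by (simp add: psi_def ac_simps)
    qed auto
    have Q0: "Qc psi a N 0 = ?tau n m k" using Q[of 0] by (simp add: fun_eq_iff)
    have Qm: "Qc psi a N (-1) x = ?tau (n-1) m k x" using Q[of "-1" x] by simp
    show ?thesis
      using casorati_core[of a N psi x, OF a N d] unfolding P0 P1 Q0 Qm hirota_D_def by simp
  qed
  have eq2: "(1/c) * hirota_D (?tau n m k) (?tau n (m+1) k) x - ?tau n m k x * ?tau n (m+1) k x
          + ?tau (n+1) m k x * ?tau (n-1) (m+1) k x = 0" for n m k x
  proof -
    define psi where "psi = (\<lambda>j y i. phi a c cs ds p q xi0 eta0 i (n + j) m k y)"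
    have d: "((\<lambda>y. psi j y i) has_field_derivative psi (j - 1) y i) (at y)" if i: "i < N" for j y i
    proof -
      have "((\<lambda>y. phi a c cs ds p q xi0 eta0 i (n + j) m k y) has_field_derivative
          phi a c cs ds p q xi0 eta0 i (n + j - 1) m k y) (at y)"
        by (rule phi_deriv) (use H i in auto)
      thus ?thesis by (simp add: psi_def algebra_simps)
    qed
    have P0: "Pc psi N 0 = ?tau n m k" by (simp add: fun_eq_iff Pc_def psi_def tau_casorati_def)
    have P1: "Pc psi N 1 x = ?tau (n+1) m k x" by (simp add: Pc_def psi_def tau_casorati_def ac_simps)
    have Q: "Qc psi c N s y = ?tau (n + s) (m+1) k y" for s y
      unfolding Qc_def tau_casorati_def
    proof (rule arg_cong[where f = det], rule eq_matI)
      fix i l assume "i < dim_row (mat N N (\<lambda>(i, j). phi a c cs ds p q xi0 eta0 i (n + s + int j) (m+1) k y))"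
        and "l < dim_col (mat N N (\<lambda>(i, j). phi a c cs ds p q xi0 eta0 i (n + s + int j) (m+1) k y))"
      hence il: "i < N" "l < N" by auto
      have "phi a c cs ds p q xi0 eta0 i (n + s + int l) (m+1) k y =
         phi a c cs ds p q xi0 eta0 i (n + s + int l) m k y - c * phi a c cs ds p q xi0 eta0 i (n + s + int l + 1) m k y"
        by (rule phi_shift_m) (use H il in auto)
      thus "mat N N (\<lambda>(i,l). psi (s + int l) y i - c * psi (s + int l + 1) y i) $$ (i,l) =
          mat N N (\<lambda>(i, j). phi a c cs ds p q xi0 eta0 i (n + s + int j) (m+1) k y) $$ (i,l)"
        using il by (simp add: psi_def ac_simps)
    qed auto
    have Q0: "Qc psi c N 0 = ?tau n (m+1) k" using Q[of 0] by (simp add: fun_eq_iff)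
    have Qm: "Qc psi c N (-1) x = ?tau (n-1) (m+1) k x" using Q[of "-1" x] by simp
    show ?thesis
      using casorati_core[of c N psi x, OF c N d] unfolding P0 P1 Q0 Qm hirota_D_def by simp
  qed
  show ?thesis unfolding bilinear_eqs_def using eq1 eq2 by blast
qed

definition gent :: "complex \<Rightarrow> complex \<Rightarrow> (nat \<Rightarrow> nat \<Rightarrow> complex) \<Rightarrow> (nat \<Rightarrow> complex) \<Rightarrow> (nat \<Rightarrow> complex)
    \<Rightarrow> (nat \<Rightarrow> complex) \<Rightarrow> (nat \<Rightarrow> complex) \<Rightarrow> int \<Rightarrow> int \<Rightarrow> int \<Rightarrow> complex \<Rightarrow> nat \<Rightarrow> nat \<Rightarrow> complex" where
  "gent a c C p q xi0 eta0 n m k x i j = C i j + 1 / (p i + q j) * (- p i / q j) powi n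
        * ((1 - c * p i) / (1 + c * q j)) powi m * ((1 - a * p i) / (1 + a * q j)) powi (-k)
        * exp ((x / p i + xi0 i) + (x / q j + eta0 j))"

lemma tau_gram_gent: "tau_gram a c N C p q xi0 eta0 n m k = (\<lambda>x. det (mat N N (\<lambda>(i,j). gent a c C p q xi0 eta0 n m k x i j)))"
  by (simp add: fun_eq_iff tau_gram_def gent_def)

definition GPhi :: "complex \<Rightarrow> complex \<Rightarrow> (nat \<Rightarrow> complex) \<Rightarrow> (nat \<Rightarrow> complex) \<Rightarrow> int \<Rightarrow> int \<Rightarrow> int \<Rightarrow> complex \<Rightarrow> nat \<Rightarrow> complex" where
  "GPhi a c p xi0 n m k y i = p i powi n * (1 - c * p i) powi m * (1 - a * p i) powi (-k) * exp (y / p i + xi0 i)"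

definition GPsi :: "complex \<Rightarrow> complex \<Rightarrow> (nat \<Rightarrow> complex) \<Rightarrow> (nat \<Rightarrow> complex) \<Rightarrow> int \<Rightarrow> int \<Rightarrow> int \<Rightarrow> complex \<Rightarrow> nat \<Rightarrow> complex" where
  "GPsi a c q eta0 n m k y j = (1 / (- q j)) powi n * (1 / (1 + c * q j)) powi m * (1 + a * q j) powi k * exp (y / q j + eta0 j)"

lemma gent_eq: "gent a c C p q xi0 eta0 n m k x i j = C i j + GPhi a c p xi0 n m k x i * GPsi a c q eta0 n m k x j / (p i + q j)"
proof -
  have 1: "- p i / q j = p i * (1 / (- q j))" by simp
  have 2: "(1 - c * p i) / (1 + c * q j) = (1 - c * p i) * (1 / (1 + c * q j))" by simp
  have 3: "((1 - a * p i) / (1 + a * q j)) powi (-k) = (1 - a * p i) powi (-k) * (1 + a * q j) powi k"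
    unfolding power_int_divide_distrib power_int_minus[of "1 + a * q j" k] by (simp add: divide_inverse)
  show ?thesis unfolding gent_def GPhi_def GPsi_def 1 2 3 power_int_mult_distrib exp_add
    by (simp add: algebra_simps)
qed

lemma GPhi_n1: assumes h: "p i \<noteq> 0" shows "GPhi a c p xi0 (n+1) m k y i = GPhi a c p xi0 n m k y i * p i"
  unfolding GPhi_def powi_succ[OF h] by (simp add: algebra_simps)
lemma GPhi_nm1: assumes h: "p i \<noteq> 0" shows "GPhi a c p xi0 (n-1) m k y i = GPhi a c p xi0 n m k y i / p i"
  unfolding GPhi_def powi_pred[OF h] by (simp add: algebra_simps)
lemma GPhi_k1: assumes h: "1 - a * p i \<noteq> 0" shows "GPhi a c p xi0 n m (k+1) y i = GPhi a c p xi0 n m k y i / (1 - a * p i)"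
  unfolding GPhi_def powi_minus_succ[OF h] by (simp add: algebra_simps)
lemma GPhi_m1: assumes h: "1 - c * p i \<noteq> 0" shows "GPhi a c p xi0 n (m+1) k y i = GPhi a c p xi0 n m k y i * (1 - c * p i)"
  unfolding GPhi_def powi_succ[OF h] by (simp add: algebra_simps)
lemma GPsi_n1: assumes h: "q j \<noteq> 0" shows "GPsi a c q eta0 (n+1) m k y j = GPsi a c q eta0 n m k y j * (1 / (- q j))"
proof -
  have h': "1 / (- q j) \<noteq> 0" using h by simp
  show ?thesis unfolding GPsi_def powi_succ[OF h'] by (simp add: algebra_simps)
qed
lemma GPsi_nm1: assumes h: "q j \<noteq> 0" shows "GPsi a c q eta0 (n-1) m k y j = GPsi a c q eta0 n m k y j / (1 / (- q j))"
proof -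
  have h': "1 / (- q j) \<noteq> 0" using h by simp
  show ?thesis unfolding GPsi_def powi_pred[OF h'] by (simp add: algebra_simps)
qed
lemma GPsi_k1: assumes h: "1 + a * q j \<noteq> 0" shows "GPsi a c q eta0 n m (k+1) y j = GPsi a c q eta0 n m k y j * (1 + a * q j)"
  unfolding GPsi_def powi_succ[OF h] by (simp add: algebra_simps)
lemma GPsi_m1: assumes h: "1 + c * q j \<noteq> 0" shows "GPsi a c q eta0 n (m+1) k y j = GPsi a c q eta0 n m k y j * (1 / (1 + c * q j))"
proof -
  have h': "1 / (1 + c * q j) \<noteq> 0" using h by simp
  show ?thesis unfolding GPsi_def powi_succ[OF h'] by (simp add: algebra_simps)
qed

lemma GPhi_deriv: "p i \<noteq> 0 \<Longrightarrow> ((\<lambda>y. GPhi a c p xi0 n m k y i) has_field_derivative GPhi a c p xi0 n m k x i / p i) (at x)"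
  unfolding GPhi_def using exp_term_deriv[of "p i" "p i powi n * (1 - c * p i) powi m * (1 - a * p i) powi (-k)" "xi0 i" x]
  by simp
lemma GPsi_deriv: "q j \<noteq> 0 \<Longrightarrow> ((\<lambda>y. GPsi a c q eta0 n m k y j) has_field_derivative GPsi a c q eta0 n m k x j / q j) (at x)"
  unfolding GPsi_def using exp_term_deriv[of "q j" "(1 / (- q j)) powi n * (1 / (1 + c * q j)) powi m * (1 + a * q j) powi k" "eta0 j" x]
  by simp

lemma alg_deriv: fixes F G pp qq :: complex
  assumes "pp \<noteq> 0" "qq \<noteq> 0" "pp + qq \<noteq> 0"
  shows "0 + (F / pp * G + G / qq * F) / (pp + qq) = F * G / (pp * qq)"
proof -
  have "F / pp * G + G / qq * F = F * G * (pp + qq) / (pp * qq)" using assms by (simp add: field_simps)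
  hence "0 + (F / pp * G + G / qq * F) / (pp + qq) = F * G * (pp + qq) / (pp * qq) / (pp + qq)" by simp
  also have "\<dots> = F * G / (pp * qq)" using assms by simp
  finally show ?thesis .
qed

lemma gent_deriv:
  assumes "p i \<noteq> 0" "q j \<noteq> 0" "p i + q j \<noteq> 0"
  shows "((\<lambda>y. gent a c C p q xi0 eta0 n m k y i j) has_field_derivative
     GPhi a c p xi0 n m k x i * GPsi a c q eta0 n m k x j / (p i * q j)) (at x)"
proof -
  let ?F = "GPhi a c p xi0 n m k x i" and ?G = "GPsi a c q eta0 n m k x j"
  have "((\<lambda>y. C i j + GPhi a c p xi0 n m k y i * GPsi a c q eta0 n m k y j / (p i + q j)) has_field_derivative
      0 + (?F / p i * ?G + ?G / q j * ?F) / (p i + q j)) (at x)"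
    by (intro DERIV_add DERIV_const DERIV_cdivide DERIV_mult GPhi_deriv GPsi_deriv assms)
  moreover have "0 + (?F / p i * ?G + ?G / q j * ?F) / (p i + q j) = ?F * ?G / (p i * q j)"
    by (rule alg_deriv[OF assms])
  ultimately show ?thesis unfolding gent_eq by simp
qed

context
  fixes F G C pp qq a c :: complex
  assumes nz: "pp \<noteq> 0" "qq \<noteq> 0" "pp + qq \<noteq> 0" "1 - a * pp \<noteq> 0" "1 + a * qq \<noteq> 0"
     "1 - c * pp \<noteq> 0" "1 + c * qq \<noteq> 0"
begin

lemma alg_d0: "F * G / (pp * qq) = F / pp * (G / qq)"
  using nz by (simp add: field_simps)

lemma alg_e1_F1: "C + F / (1 - a * pp) * (G * (1 + a * qq)) / (pp + qq) = (C + F * G / (pp + qq)) + (a * (F / (1 - a * pp))) * G"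
proof -
  have *: "C + F / d * (G * (1 + a * qq)) / s = (C + F * G / s) + (a * (F / d)) * G"
    if h: "d \<noteq> 0" "s \<noteq> 0" "g \<noteq> 0" "d = 1 - a * pp" "s = pp + qq" "g = 1 + c * qq" for d s g
    using h(1-3) nz(1,2) apply (simp add: field_simps)
    apply (simp only: h(4-6))
    by (simp add: algebra_simps)
  show ?thesis by (rule *) (use nz in auto)
qed

lemma alg_e1_Fp: "C + F / (1 - a * pp) * pp * (G * (1 + a * qq) * (1 / - qq)) / (pp + qq) = (C + F * G / (pp + qq)) + F / (1 - a * pp) * (- (G / qq))"
proof -
  have *: "C + F / d * pp * (G * (1 + a * qq) * (1 / - qq)) / s = (C + F * G / s) + F / d * (- (G / qq))"
    if h: "d \<noteq> 0" "s \<noteq> 0" "g \<noteq> 0" "d = 1 - a * pp" "s = pp + qq" "g = 1 + c * qq" for d s g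
    using h(1-3) nz(1,2) apply (simp add: field_simps)
    apply (simp only: h(4-6))
    by (simp add: algebra_simps)
  show ?thesis by (rule *) (use nz in auto)
qed

lemma alg_e1_Fm: "C + F / pp * (G / (1 / - qq)) / (pp + qq) = (C + F * G / (pp + qq)) + F / pp * (- G)"
proof -
  have *: "C + F / pp * (G / (1 / - qq)) / s = (C + F * G / s) + F / pp * (- G)"
    if h: "d \<noteq> 0" "s \<noteq> 0" "g \<noteq> 0" "d = 1 - a * pp" "s = pp + qq" "g = 1 + c * qq" for d s g
    using h(1-3) nz(1,2) apply (simp add: field_simps)
    apply (simp only: h(4-6))
    by (simp add: algebra_simps)
  show ?thesis by (rule *) (use nz in auto)
qed

lemma alg_e1_d1: "F / (1 - a * pp) * (G * (1 + a * qq)) / (pp * qq) = (F / pp + a * (F / (1 - a * pp))) * (G / qq + a * G)"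
proof -
  have *: "F / d * (G * (1 + a * qq)) / (pp * qq) = (F / pp + a * (F / d)) * (G / qq + a * G)"
    if h: "d \<noteq> 0" "s \<noteq> 0" "g \<noteq> 0" "d = 1 - a * pp" "s = pp + qq" "g = 1 + c * qq" for d s g
    using h(1-3) nz(1,2) apply (simp add: field_simps)
    apply (simp only: h(4-6))
    by (simp add: algebra_simps)
  show ?thesis by (rule *) (use nz in auto)
qed

lemma alg_e2_F1: "C + F * (1 - c * pp) * (G * (1 / (1 + c * qq))) / (pp + qq) = (C + F * G / (pp + qq)) + (- c * F) * (G * (1 / (1 + c * qq)))"
proof -
  have *: "C + F * (1 - c * pp) * (G * (1 / g)) / s = (C + F * G / s) + (- c * F) * (G * (1 / g))"
    if h: "d \<noteq> 0" "s \<noteq> 0" "g \<noteq> 0" "d = 1 - a * pp" "s = pp + qq" "g = 1 + c * qq" for d s g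
    using h(1-3) nz(1,2) apply (simp add: field_simps)
    apply (simp only: h(4-6))
    by (simp add: algebra_simps)
  show ?thesis by (rule *) (use nz in auto)
qed

lemma alg_e2_Fp: "C + F * pp * (G * (1 / - qq)) / (pp + qq) = (C + F * G / (pp + qq)) + F * (- (G / qq))"
proof -
  have *: "C + F * pp * (G * (1 / - qq)) / s = (C + F * G / s) + F * (- (G / qq))"
    if h: "d \<noteq> 0" "s \<noteq> 0" "g \<noteq> 0" "d = 1 - a * pp" "s = pp + qq" "g = 1 + c * qq" for d s g
    using h(1-3) nz(1,2) apply (simp add: field_simps)
    apply (simp only: h(4-6))
    by (simp add: algebra_simps)
  show ?thesis by (rule *) (use nz in auto)
qed

lemma alg_e2_Fm: "C + F * (1 - c * pp) / pp * (G * (1 / (1 + c * qq)) / (1 / - qq)) / (pp + qq) = (C + F * G / (pp + qq)) + F / pp * (- (G * (1 / (1 + c * qq))))"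
proof -
  have *: "C + F * (1 - c * pp) / pp * (G * (1 / g) / (1 / - qq)) / s = (C + F * G / s) + F / pp * (- (G * (1 / g)))"
    if h: "d \<noteq> 0" "s \<noteq> 0" "g \<noteq> 0" "d = 1 - a * pp" "s = pp + qq" "g = 1 + c * qq" for d s g
    using h(1-3) nz(1,2) apply (simp add: field_simps)
    apply (simp only: h(4-6))
    by (simp add: algebra_simps)
  show ?thesis by (rule *) (use nz in auto)
qed

lemma alg_e2_d1: "F * (1 - c * pp) * (G * (1 / (1 + c * qq))) / (pp * qq) = (F / pp - c * F) * (G / qq - c * (G * (1 / (1 + c * qq))))"
proof -
  have *: "F * (1 - c * pp) * (G * (1 / g)) / (pp * qq) = (F / pp - c * F) * (G / qq - c * (G * (1 / g)))"
    if h: "d \<noteq> 0" "s \<noteq> 0" "g \<noteq> 0" "d = 1 - a * pp" "s = pp + qq" "g = 1 + c * qq" for d s g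
    using h(1-3) nz(1,2) apply (simp add: field_simps)
    apply (simp only: h(4-6))
    by (simp add: algebra_simps)
  show ?thesis by (rule *) (use nz in auto)
qed

end

lemma gram_bilinear:
  fixes a c :: complex and N :: nat
  assumes a: "a \<noteq> 0" and c: "c \<noteq> 0"
    and H1: "\<forall>i<N. p i \<noteq> 0 \<and> q i \<noteq> 0 \<and> 1 - a * p i \<noteq> 0 \<and> 1 + a * q i \<noteq> 0
                 \<and> 1 - c * p i \<noteq> 0 \<and> 1 + c * q i \<noteq> 0"
    and H2: "\<forall>i<N. \<forall>j<N. p i + q j \<noteq> 0"
  shows "bilinear_eqs a c (tau_gram a c N C p q xi0 eta0)"
proof -
  let ?E = "gent a c C p q xi0 eta0"
  have nz: "p i \<noteq> 0" "q j \<noteq> 0" "p i + q j \<noteq> 0" "1 - a * p i \<noteq> 0" "1 + a * q j \<noteq> 0"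
     "1 - c * p i \<noteq> 0" "1 + c * q j \<noteq> 0" if "i < N" "j < N" for i j
    using H1 H2 that by auto
  have eq1: "(1/a) * hirota_D (tau_gram a c N C p q xi0 eta0 n m (k+1)) (tau_gram a c N C p q xi0 eta0 n m k) x
      - tau_gram a c N C p q xi0 eta0 n m (k+1) x * tau_gram a c N C p q xi0 eta0 n m k x
      + tau_gram a c N C p q xi0 eta0 (n+1) m (k+1) x * tau_gram a c N C p q xi0 eta0 (n-1) m k x = 0" for n m k x
  proof -
    define Ph where "Ph = (\<lambda>i. GPhi a c p xi0 n m k x i)"
    define Ps where "Ps = (\<lambda>j. GPsi a c q eta0 n m k x j)"
    define u where "u = (\<lambda>i. Ph i / (1 - a * p i))"
    define ph where "ph = (\<lambda>i. Ph i / p i)"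
    define w where "w = (\<lambda>j. Ps j / q j)"
    have "(1/a) * (deriv (\<lambda>y. det (mat N N (\<lambda>(i,j). ?E n m (k+1) y i j))) x * det (mat N N (\<lambda>(i,j). ?E n m k x i j))
          - det (mat N N (\<lambda>(i,j). ?E n m (k+1) x i j)) * deriv (\<lambda>y. det (mat N N (\<lambda>(i,j). ?E n m k y i j))) x)
        - det (mat N N (\<lambda>(i,j). ?E n m (k+1) x i j)) * det (mat N N (\<lambda>(i,j). ?E n m k x i j))
        + det (mat N N (\<lambda>(i,j). ?E (n+1) m (k+1) x i j)) * det (mat N N (\<lambda>(i,j). ?E (n-1) m k x i j)) = 0"
    proof (rule gram_eq1[where u = u and ps = Ps and w = w and ph = ph, OF a])
      fix i j assume ij: "i < N" "j < N"
      note h = nz[OF ij]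
      show "?E n m (k+1) x i j = ?E n m k x i j + (a * u i) * Ps j"
        unfolding gent_eq GPhi_k1[where a=a and p=p and i=i, OF h(4)] GPsi_k1[where a=a and q=q and j=j, OF h(5)] u_def Ps_def Ph_def
        by (rule alg_e1_F1[OF h])
      show "?E (n+1) m (k+1) x i j = ?E n m k x i j + u i * (- w j)"
        unfolding gent_eq GPhi_n1[where p=p and i=i, OF h(1)] GPsi_n1[where q=q and j=j, OF h(2)] GPhi_k1[where a=a and p=p and i=i, OF h(4)] GPsi_k1[where a=a and q=q and j=j, OF h(5)] u_def w_def Ps_def Ph_def
        by (rule alg_e1_Fp[OF h])
      show "?E (n-1) m k x i j = ?E n m k x i j + ph i * (- Ps j)"
        unfolding gent_eq GPhi_nm1[where p=p and i=i, OF h(1)] GPsi_nm1[where q=q and j=j, OF h(2)] ph_def Ps_def Ph_def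
        by (rule alg_e1_Fm[OF h])
      have "ph i * w j = GPhi a c p xi0 n m k x i * GPsi a c q eta0 n m k x j / (p i * q j)"
        unfolding ph_def w_def Ph_def Ps_def by (rule alg_d0[OF h, symmetric])
      thus "((\<lambda>y. ?E n m k y i j) has_field_derivative ph i * w j) (at x)"
        using gent_deriv[where p=p and i=i and q=q and j=j, OF h(1-3)] by simp
      have "(ph i + a * u i) * (w j + a * Ps j) = GPhi a c p xi0 n m (k+1) x i * GPsi a c q eta0 n m (k+1) x j / (p i * q j)"
        unfolding GPhi_k1[where a=a and p=p and i=i, OF h(4)] GPsi_k1[where a=a and q=q and j=j, OF h(5)] ph_def u_def w_def Ph_def Ps_def by (rule alg_e1_d1[OF h, symmetric])
      thus "((\<lambda>y. ?E n m (k+1) y i j) has_field_derivative (ph i + a * u i) * (w j + a * Ps j)) (at x)"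
        using gent_deriv[where p=p and i=i and q=q and j=j, OF h(1-3)] by simp
    qed
    thus ?thesis unfolding tau_gram_gent hirota_D_def .
  qed
  have eq2: "(1/c) * hirota_D (tau_gram a c N C p q xi0 eta0 n m k) (tau_gram a c N C p q xi0 eta0 n (m+1) k) x
      - tau_gram a c N C p q xi0 eta0 n m k x * tau_gram a c N C p q xi0 eta0 n (m+1) k x
      + tau_gram a c N C p q xi0 eta0 (n+1) m k x * tau_gram a c N C p q xi0 eta0 (n-1) (m+1) k x = 0" for n m k x
  proof -
    define Ph where "Ph = (\<lambda>i. GPhi a c p xi0 n m k x i)"
    define Ps where "Ps = (\<lambda>j. GPsi a c q eta0 n m k x j)"
    define r where "r = (\<lambda>j. Ps j * (1 / (1 + c * q j)))"
    define ph where "ph = (\<lambda>i. Ph i / p i)"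
    define w where "w = (\<lambda>j. Ps j / q j)"
    have "(1/c) * (deriv (\<lambda>y. det (mat N N (\<lambda>(i,j). ?E n m k y i j))) x * det (mat N N (\<lambda>(i,j). ?E n (m+1) k x i j))
          - det (mat N N (\<lambda>(i,j). ?E n m k x i j)) * deriv (\<lambda>y. det (mat N N (\<lambda>(i,j). ?E n (m+1) k y i j))) x)
        - det (mat N N (\<lambda>(i,j). ?E n m k x i j)) * det (mat N N (\<lambda>(i,j). ?E n (m+1) k x i j))
        + det (mat N N (\<lambda>(i,j). ?E (n+1) m k x i j)) * det (mat N N (\<lambda>(i,j). ?E (n-1) (m+1) k x i j)) = 0"
    proof (rule gram_eq2[where f = Ph and r = r and w = w and ph = ph, OF c])
      fix i j assume ij: "i < N" "j < N"
      note h = nz[OF ij]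
      show "?E n (m+1) k x i j = ?E n m k x i j + (- c * Ph i) * r j"
        unfolding gent_eq GPhi_m1[where c=c and p=p and i=i, OF h(6)] GPsi_m1[where c=c and q=q and j=j, OF h(7)] r_def Ps_def Ph_def
        by (rule alg_e2_F1[OF h])
      show "?E (n+1) m k x i j = ?E n m k x i j + Ph i * (- w j)"
        unfolding gent_eq GPhi_n1[where p=p and i=i, OF h(1)] GPsi_n1[where q=q and j=j, OF h(2)] w_def Ps_def Ph_def
        by (rule alg_e2_Fp[OF h])
      show "?E (n-1) (m+1) k x i j = ?E n m k x i j + ph i * (- r j)"
        unfolding gent_eq GPhi_nm1[where p=p and i=i, OF h(1)] GPsi_nm1[where q=q and j=j, OF h(2)] GPhi_m1[where c=c and p=p and i=i, OF h(6)] GPsi_m1[where c=c and q=q and j=j, OF h(7)] ph_def r_def Ps_def Ph_def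
        by (rule alg_e2_Fm[OF h])
      have "ph i * w j = GPhi a c p xi0 n m k x i * GPsi a c q eta0 n m k x j / (p i * q j)"
        unfolding ph_def w_def Ph_def Ps_def by (rule alg_d0[OF h, symmetric])
      thus "((\<lambda>y. ?E n m k y i j) has_field_derivative ph i * w j) (at x)"
        using gent_deriv[where p=p and i=i and q=q and j=j, OF h(1-3)] by simp
      have "(ph i - c * Ph i) * (w j - c * r j) = GPhi a c p xi0 n (m+1) k x i * GPsi a c q eta0 n (m+1) k x j / (p i * q j)"
        unfolding GPhi_m1[where c=c and p=p and i=i, OF h(6)] GPsi_m1[where c=c and q=q and j=j, OF h(7)] ph_def r_def w_def Ph_def Ps_def by (rule alg_e2_d1[OF h, symmetric])
      thus "((\<lambda>y. ?E n (m+1) k y i j) has_field_derivative (ph i - c * Ph i) * (w j - c * r j)) (at x)"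
        using gent_deriv[where p=p and i=i and q=q and j=j, OF h(1-3)] by simp
    qed
    thus ?thesis unfolding tau_gram_gent hirota_D_def .
  qed
  show ?thesis unfolding bilinear_eqs_def using eq1 eq2 by blast
qed

theorem lemma3:
  fixes a c :: complex and N :: nat
  assumes "a \<noteq> 0" and "c \<noteq> 0" and "N \<ge> 1"
  shows "(\<forall>cs ds p q xi0 eta0.
            (\<forall>i<N. p i \<noteq> 0 \<and> q i \<noteq> 0 \<and> 1 - a * p i \<noteq> 0 \<and> 1 - a * q i \<noteq> 0
                 \<and> 1 - c * p i \<noteq> 0 \<and> 1 - c * q i \<noteq> 0)
            \<longrightarrow> bilinear_eqs a c (tau_casorati a c N cs ds p q xi0 eta0))
       \<and> (\<forall>C p q xi0 eta0.
            (\<forall>i<N. p i \<noteq> 0 \<and> q i \<noteq> 0 \<and> 1 - a * p i \<noteq> 0 \<and> 1 + a * q i \<noteq> 0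
                 \<and> 1 - c * p i \<noteq> 0 \<and> 1 + c * q i \<noteq> 0)
            \<and> (\<forall>i<N. \<forall>j<N. p i + q j \<noteq> 0)
            \<longrightarrow> bilinear_eqs a c (tau_gram a c N C p q xi0 eta0))"
proof (intro conjI allI impI)
  fix cs ds p q xi0 eta0
  assume H: "\<forall>i<N. p i \<noteq> 0 \<and> q i \<noteq> 0 \<and> 1 - a * p i \<noteq> 0 \<and> 1 - a * q i \<noteq> 0
                 \<and> 1 - c * p i \<noteq> 0 \<and> 1 - c * q i \<noteq> 0"
  show "bilinear_eqs a c (tau_casorati a c N cs ds p q xi0 eta0)"
    by (rule casorati_bilinear[OF assms H])
next
  fix C p q xi0 eta0
  assume H: "(\<forall>i<N. p i \<noteq> 0 \<and> q i \<noteq> 0 \<and> 1 - a * p i \<noteq> 0 \<and> 1 + a * q i \<noteq> 0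
                 \<and> 1 - c * p i \<noteq> 0 \<and> 1 + c * q i \<noteq> 0)
            \<and> (\<forall>i<N. \<forall>j<N. p i + q j \<noteq> 0)"
  show "bilinear_eqs a c (tau_gram a c N C p q xi0 eta0)"
    by (rule gram_bilinear[OF assms(1,2)]) (use H in auto)
qed

end
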